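(* Let $\varphi=\frac{1+\sqrt5}{2}$. (i) If $x\in[0,1]\setminus\mathbb{Q}$ and all partial quotients of the continued fraction expansion of $x$ are at most $2$, then $g'_{\varphi^{-1}}(x)=+\infty$. (ii) There exists $y\in[0,1]\setminus\mathbb{Q}$ all of whose partial quotients are at most $3$ such that $g'_{\varphi^{-1}}(y)=0$.
   Context: For irrational $x\in(0,1)$, $x=[0;a_1,a_2,\ldots]$ is its regular continued fraction with partial quotients $a_i$. For $\lambda\in(0,1)$ the Denjoy–Tichy–Uitz function $g_\lambda:[0,1]\to[0,1]$ is defined by $g_\lambda(0)=0$, $g_\lambda(1)=1$, and, whenever $g_\lambda$ is defined at two consecutive Farey fractions $\frac pq<\frac rs$, $g_\lambda\!\left(\frac{p+r}{q+s}\right)=(1-\lambda)g_\lambda\!\left(\frac pq\right)+\lambda g_\lambda\!\left(\frac rs\right)$, extended by continuity. For irrational $x$, $g_{\varphi^{-1}}(x)=\sum_{i\ge1}(-1)^{i-1}\varphi^{-(a_1+2a_2+a_3+2a_4+\cdots+c_ia_i-1)}$ where $c_i=1$ for odd $i$ and $c_i=2$ for even $i$. Derivatives are two-sided and may equal $+\infty$. *)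

theory Defs
  imports "HOL-Analysis.Analysis"
begin

text \<open>Gauss map and partial quotients: for x = [0; a_1, a_2, ...] irrational in (0,1),
  cf_pq x n = a_(n+1).\<close>
definition gauss_map :: "real \<Rightarrow> real" where
  "gauss_map x = frac (1 / x)"

definition cf_pq :: "real \<Rightarrow> nat \<Rightarrow> nat" where
  "cf_pq x n = nat \<lfloor>1 / ((gauss_map ^^ n) x)\<rfloor>"

text \<open>Consecutive Farey fractions p/q < r/s in [0,1] are exactly the pairs with
  r q - p s = 1 (and p \<ge> 0, q,s > 0, r \<le> s).  The Denjoy-Tichy-Uitz function is the
  unique continuous function on [0,1] with g 0 = 0, g 1 = 1 satisfying the mediant rule.
  Outside [0,1] it is set to 0 (irrelevant for the statement).\<close>
definition dtu_rule :: "real \<Rightarrow> (real \<Rightarrow> real) \<Rightarrow> bool" where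
  "dtu_rule lam f \<longleftrightarrow>
     continuous_on {0..1} f \<and> f 0 = 0 \<and> f 1 = 1 \<and>
     (\<forall>p q r s :: int. 0 \<le> p \<and> 0 < q \<and> 0 < s \<and> r \<le> s \<and> r * q - p * s = 1 \<longrightarrow>
        f (real_of_int (p + r) / real_of_int (q + s)) =
          (1 - lam) * f (real_of_int p / real_of_int q) + lam * f (real_of_int r / real_of_int s)) \<and>
     (\<forall>x. x \<notin> {0..1} \<longrightarrow> f x = 0)"

definition dtu :: "real \<Rightarrow> real \<Rightarrow> real" where
  "dtu lam = (THE f. dtu_rule lam f)"

end

theory Submission
  imports Defs
begin


definition Tmap :: "real \<Rightarrow> (real \<Rightarrow> real) \<Rightarrow> real \<Rightarrow> real" where
 "Tmap v f x = (if x \<le> 1/2 then v * f (x/(1-x)) else v + (1-v) * f (2 - 1/x))"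

primrec hh :: "real \<Rightarrow> nat \<Rightarrow> real \<Rightarrow> real" where
 "hh v 0 = (\<lambda>x. x)" | "hh v (Suc n) = Tmap v (hh v n)"

lemma Lin: "0 \<le> x \<Longrightarrow> x \<le> 1/2 \<Longrightarrow> x/(1-x) \<in> {0..(1::real)}"
  by (auto simp: field_simps)

lemma Rin: "1/2 \<le> x \<Longrightarrow> x \<le> 1 \<Longrightarrow> 2 - 1/x \<in> {0..(1::real)}"
  by (auto simp: field_simps)

definition goodf :: "real \<Rightarrow> (real \<Rightarrow> real) \<Rightarrow> bool" where
 "goodf v f \<longleftrightarrow> (\<forall>x\<in>{0..1}. f x \<in> {0..1}) \<and> f 0 = 0 \<and> f 1 = 1 \<and>
    (\<forall>x\<in>{0..1}. \<forall>y\<in>{0..1}. x \<le> y \<longrightarrow> f x \<le> f y) \<and> continuous_on {0..1} f"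

lemma Tmap_good:
  assumes v: "0 < v" "v < 1" and g: "goodf v f"
  shows "goodf v (Tmap v f)"
proof -
  from g have r: "\<And>x. x\<in>{0..1} \<Longrightarrow> f x \<in> {0..1}" and f0: "f 0 = 0" and f1: "f 1 = 1"
    and mo: "\<And>x y. x\<in>{0..1} \<Longrightarrow> y\<in>{0..1} \<Longrightarrow> x \<le> y \<Longrightarrow> f x \<le> f y"
    and c: "continuous_on {0..1} f" unfolding goodf_def by auto
  have range: "Tmap v f x \<in> {0..1}" if x: "x \<in> {0..1}" for x
  proof (cases "x \<le> 1/2")
    case True
    then have "f (x/(1-x)) \<in> {0..1}" using r Lin x by auto
    then show ?thesis using True v by (auto simp: Tmap_def intro: mult_le_one)
  next
    case False
    then have "f (2 - 1/x) \<in> {0..1}" using r Rin x by auto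
    then have "(1-v) * f (2 - 1/x) \<le> 1 - v" using v by (auto intro: mult_left_le)
    moreover have "0 \<le> (1-v) * f (2 - 1/x)" using v \<open>f (2 - 1/x) \<in> {0..1}\<close> by auto
    ultimately have "v + (1-v) * f (2 - 1/x) \<in> {0..1}" using v by (simp only: atLeastAtMost_iff) linarith
    then show ?thesis using False by (simp add: Tmap_def)
  qed
  have mono: "Tmap v f x \<le> Tmap v f y" if "x\<in>{0..1}" "y\<in>{0..1}" "x \<le> y" for x y
  proof (cases "y \<le> 1/2")
    case True
    then have "x/(1-x) \<le> y/(1-y)" using that by (auto simp: field_simps)
    then have "f (x/(1-x)) \<le> f (y/(1-y))" using mo Lin that True by auto
    then show ?thesis using True that v by (auto simp: Tmap_def)
  next
    case False
    note yF = False
    show ?thesis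
    proof (cases "x \<le> 1/2")
      case True
      have "f (x/(1-x)) \<le> 1" using r Lin that True by auto
      then have a: "v * f (x/(1-x)) \<le> v" using v by (auto intro: mult_left_le)
      have "0 \<le> f (2 - 1/y)" using r Rin that False by auto
      then have b: "0 \<le> (1-v) * f (2 - 1/y)" using v by auto
      have "Tmap v f x = v * f (x/(1-x))" "Tmap v f y = v + (1-v) * f (2 - 1/y)"
        using True False by (auto simp: Tmap_def)
      then show ?thesis using a b by linarith
    next
      case False
      then have "2 - 1/x \<le> 2 - 1/y" using that by (auto simp: field_simps)
      then have "f (2 - 1/x) \<le> f (2 - 1/y)" using mo Rin that False yF by auto
      then show ?thesis using False yF v by (auto simp: Tmap_def intro: mult_left_mono)
    qed
  qed
  have cont: "continuous_on {0..1} (Tmap v f)"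
  proof -
    have e: "{0..1::real} = {0..1/2} \<union> {1/2..1}" by auto
    have c1: "continuous_on {0..1/2} (\<lambda>x. v * f (x/(1-x)))"
    proof -
      have "continuous_on {0..1/2} (\<lambda>x::real. x/(1-x))"
        by (intro continuous_intros) auto
      moreover have "(\<lambda>x::real. x/(1-x)) ` {0..1/2} \<subseteq> {0..1}" using Lin by auto
      ultimately have "continuous_on {0..1/2} (\<lambda>x. f (x/(1-x)))"
        using continuous_on_compose2[OF c] by blast
      then show ?thesis by (intro continuous_intros)
    qed
    have c2: "continuous_on {1/2..1} (\<lambda>x. v + (1-v) * f (2 - 1/x))"
    proof -
      have "continuous_on {1/2..1} (\<lambda>x::real. 2 - 1/x)"
        by (intro continuous_intros) auto
      moreover have "(\<lambda>x::real. 2 - 1/x) ` {1/2..1} \<subseteq> {0..1}" using Rin by auto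
      ultimately have "continuous_on {1/2..1} (\<lambda>x. f (2 - 1/x))"
        using continuous_on_compose2[OF c] by blast
      then show ?thesis by (intro continuous_intros)
    qed
    have "continuous_on ({0..1/2} \<union> {1/2..1}) (\<lambda>x. if x \<le> 1/2 then v * f (x/(1-x)) else v + (1-v) * f (2 - 1/x))"
    proof (rule continuous_on_cases[OF _ _ c1 c2])
      show "\<forall>x. (x \<in> {0..1/2} \<and> \<not> x \<le> 1/2) \<or> (x \<in> {1/2..1} \<and> x \<le> 1/2) \<longrightarrow>
        v * f (x/(1-x)) = v + (1-v) * f (2 - 1/x)"
      proof (intro allI impI)
        fix x :: real assume "(x \<in> {0..1/2} \<and> \<not> x \<le> 1/2) \<or> (x \<in> {1/2..1} \<and> x \<le> 1/2)"
        then have "x = 1/2" by auto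
        then have e1: "x/(1-x) = 1" and e2: "2 - 1/x = 0" by (simp_all add: field_simps)
        show "v * f (x/(1-x)) = v + (1-v) * f (2 - 1/x)" unfolding e1 e2 f0 f1 by simp
      qed
    qed auto
    then show ?thesis unfolding e Tmap_def[abs_def] .
  qed
  show ?thesis unfolding goodf_def using range mono cont by (auto simp: Tmap_def f0 f1)
qed

lemma hh_good: "0 < v \<Longrightarrow> v < 1 \<Longrightarrow> goodf v (hh v n)"
proof (induction n)
  case 0 then show ?case by (auto simp: goodf_def intro: continuous_intros)
next
  case (Suc n) then show ?case by (simp add: Tmap_good)
qed

lemma Tmap_contr:
  assumes v: "0 < v" "v < 1" and x: "x \<in> {0..1}"
  shows "\<exists>u\<in>{0..1}. \<bar>Tmap v f x - Tmap v g x\<bar> \<le> max v (1-v) * \<bar>f u - g u\<bar>"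
proof (cases "x \<le> 1/2")
  case True
  have "\<bar>Tmap v f x - Tmap v g x\<bar> = v * \<bar>f (x/(1-x)) - g (x/(1-x))\<bar>"
    using True v by (simp add: Tmap_def abs_mult flip: right_diff_distrib)
  also have "\<dots> \<le> max v (1-v) * \<bar>f (x/(1-x)) - g (x/(1-x))\<bar>" by (intro mult_right_mono) auto
  finally show ?thesis using Lin True x by auto
next
  case False
  have "\<bar>Tmap v f x - Tmap v g x\<bar> = (1-v) * \<bar>f (2-1/x) - g (2-1/x)\<bar>"
    using False v by (simp add: Tmap_def abs_mult flip: right_diff_distrib)
  also have "\<dots> \<le> max v (1-v) * \<bar>f (2-1/x) - g (2-1/x)\<bar>" by (intro mult_right_mono) auto
  finally show ?thesis using Rin False x by auto
qed

lemma hh_diff: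
  assumes v: "0 < v" "v < 1"
  shows "\<forall>x\<in>{0..1}. \<bar>hh v (Suc n) x - hh v n x\<bar> \<le> max v (1-v) ^ n"
proof (induction n)
  case 0
  show ?case using hh_good[OF v, of 1] hh_good[OF v, of 0] unfolding goodf_def
    by (auto simp: abs_le_iff)
next
  case (Suc n)
  show ?case
  proof
    fix x :: real assume x: "x \<in> {0..1}"
    obtain u where u: "u\<in>{0..1}" "\<bar>Tmap v (hh v (Suc n)) x - Tmap v (hh v n) x\<bar> \<le> max v (1-v) * \<bar>hh v (Suc n) u - hh v n u\<bar>"
      using Tmap_contr[OF v x] by blast
    have "max v (1-v) * \<bar>hh v (Suc n) u - hh v n u\<bar> \<le> max v (1-v) * max v (1-v) ^ n"
      using Suc u(1) by (intro mult_left_mono) auto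
    then show "\<bar>hh v (Suc (Suc n)) x - hh v (Suc n) x\<bar> \<le> max v (1-v) ^ Suc n"
      using u(2) by simp
  qed
qed




declare hh.simps(2)[simp del]

definition GG :: "real \<Rightarrow> real \<Rightarrow> real" where
 "GG v x = (if x \<in> {0..1} then x + (\<Sum>i. hh v (Suc i) x - hh v i x) else 0)"

lemma geo_zero:
  fixes a C m :: real
  assumes "\<And>n. a \<le> C * m ^ n" "0 \<le> m" "m < 1"
  shows "a \<le> 0"
proof -
  have "(\<lambda>n. C * m ^ n) \<longlonglongrightarrow> C * 0"
    by (intro tendsto_mult tendsto_const LIMSEQ_power_zero) (use assms in auto)
  then show ?thesis using assms(1) by (auto intro: LIMSEQ_le_const)
qed

context
  fixes v :: real
  assumes v: "0 < v" "v < 1"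
begin

abbreviation "mu \<equiv> max v (1-v)"

lemma mu: "0 \<le> mu" "mu < 1" using v by auto

lemma dsum: "x \<in> {0..1} \<Longrightarrow> summable (\<lambda>i. hh v (Suc i) x - hh v i x)"
  by (rule summable_comparison_test'[OF summable_geometric[of mu], where N=0])
     (use hh_diff[OF v] mu in auto)

lemma GG_err: assumes x: "x \<in> {0..1}" shows "\<bar>GG v x - hh v n x\<bar> \<le> mu ^ n / (1 - mu)"
proof -
  let ?d = "\<lambda>i. hh v (Suc i) x - hh v i x"
  have s: "summable ?d" using dsum x .
  have h: "hh v n x = x + (\<Sum>i<n. ?d i)" using sum_lessThan_telescope[of "\<lambda>i. hh v i x" n] by simp
  have "GG v x - hh v n x = (\<Sum>i. ?d (i + n))"
    using x h suminf_minus_initial_segment[OF s, of n] by (simp add: GG_def)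
  moreover have sg: "summable (\<lambda>i. mu ^ (i + n))"
    using summable_geometric[of mu] mu by (simp add: power_add summable_mult2)
  moreover have "(\<Sum>i. mu ^ (i + n)) = mu ^ n / (1 - mu)"
    using suminf_geometric[of mu] mu by (simp add: power_add suminf_mult2[symmetric] summable_geometric)
  moreover have "\<bar>\<Sum>i. ?d (i + n)\<bar> \<le> (\<Sum>i. mu ^ (i + n))"
  proof -
    have hd: "\<And>i. \<bar>?d (i+n)\<bar> \<le> mu^(i+n)" using hh_diff[OF v] x by blast
    have s2: "summable (\<lambda>i. ?d (i + n))" using summable_iff_shift[of ?d n] s by blast
    have a: "(\<Sum>i. ?d (i + n)) \<le> (\<Sum>i. mu ^ (i + n))"
      apply (rule suminf_le[OF _ s2 sg]) subgoal for i using hd[of i] by (simp only: abs_le_iff) done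
    have b: "(\<Sum>i. uminus (mu ^ (i + n))) \<le> (\<Sum>i. ?d (i + n))"
      apply (rule suminf_le[OF _ summable_minus[OF sg] s2]) subgoal for i using hd[of i] by (simp only: abs_le_iff) linarith done
    have "(\<Sum>i. uminus (mu ^ (i + n))) = - (\<Sum>i. mu ^ (i + n))" using suminf_minus[OF sg] .
    then show ?thesis using a b by auto
  qed
  ultimately show ?thesis by simp
qed

lemma GG_0: "GG v 0 = 0"
proof -
  have "\<And>n. hh v n 0 = 0" using hh_good[OF v] unfolding goodf_def by auto
  then show ?thesis by (simp add: GG_def)
qed

lemma GG_1: "GG v 1 = 1"
proof -
  have "\<And>n. hh v n 1 = 1" using hh_good[OF v] unfolding goodf_def by auto
  then show ?thesis by (simp add: GG_def)
qed

lemma GG_mono: assumes "x \<in> {0..1}" "y \<in> {0..1}" "x \<le> y" shows "GG v x \<le> GG v y"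
proof -
  have "GG v x - GG v y \<le> 2 / (1 - mu) * mu ^ n" for n
  proof -
    have "hh v n x \<le> hh v n y" using hh_good[OF v, of n] assms unfolding goodf_def by auto
    then show ?thesis using GG_err[OF assms(1), of n] GG_err[OF assms(2), of n]
      by (auto simp: abs_le_iff field_simps)
  qed
  then show ?thesis using geo_zero[OF _ mu] by (metis diff_le_0_iff_le)
qed

lemma GG_range: assumes "x \<in> {0..1}" shows "GG v x \<in> {0..1}"
proof -
  have "- GG v x \<le> 1 / (1 - mu) * mu ^ n" "GG v x - 1 \<le> 1 / (1 - mu) * mu ^ n" for n
  proof -
    have "hh v n x \<in> {0..1}" using hh_good[OF v, of n] assms unfolding goodf_def by auto
    then show "- GG v x \<le> 1 / (1 - mu) * mu ^ n" "GG v x - 1 \<le> 1 / (1 - mu) * mu ^ n"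
      using GG_err[OF assms(1), of n] by (auto simp: abs_le_iff field_simps)
  qed
  then have "- GG v x \<le> 0" "GG v x - 1 \<le> 0" using geo_zero[OF _ mu] by blast+
  then show ?thesis by auto
qed

lemma GG_cont: "continuous_on {0..1} (GG v)"
proof (rule uniform_limit_theorem)
  show "\<forall>\<^sub>F n in sequentially. continuous_on {0..1} (hh v n)"
    using hh_good[OF v] unfolding goodf_def by auto
  show "uniform_limit {0..1} (hh v) (GG v) sequentially"
  proof (rule uniform_limitI)
    fix e :: real assume e: "e > 0"
    have "(\<lambda>n. 1 / (1 - mu) * mu ^ n) \<longlonglongrightarrow> 1 / (1 - mu) * 0"
      by (intro tendsto_mult tendsto_const LIMSEQ_power_zero) (use mu in auto)
    then have "\<forall>\<^sub>F n in sequentially. 1 / (1 - mu) * mu ^ n < e" using e by (auto dest: order_tendstoD(2))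
    then show "\<forall>\<^sub>F n in sequentially. \<forall>x\<in>{0..1}. dist (hh v n x) (GG v x) < e"
    proof (rule eventually_mono)
      fix n assume ee: "1 / (1 - mu) * mu ^ n < e"
      then show "\<forall>x\<in>{0..1}. dist (hh v n x) (GG v x) < e"
      proof (intro ballI)
        fix x :: real assume x: "x \<in> {0..1}"
        have "\<bar>GG v x - hh v n x\<bar> \<le> mu ^ n / (1 - mu)" using GG_err[OF x] .
        then show "dist (hh v n x) (GG v x) < e" using ee by (simp add: dist_real_def abs_minus_commute)
      qed
    qed
  qed
qed simp

lemma GG_fix: assumes x: "x \<in> {0..1}" shows "GG v x = Tmap v (GG v) x"
proof -
  have "\<bar>GG v x - Tmap v (GG v) x\<bar> \<le> 2 / (1 - mu) * mu ^ n" for n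
  proof -
    obtain u where u: "u\<in>{0..1}" "\<bar>Tmap v (hh v n) x - Tmap v (GG v) x\<bar> \<le> mu * \<bar>hh v n u - GG v u\<bar>"
      using Tmap_contr[OF v x] by blast
    have a: "mu * \<bar>hh v n u - GG v u\<bar> \<le> mu * (mu ^ n / (1 - mu))"
      using GG_err[OF u(1), of n] mu by (intro mult_left_mono) (auto simp: abs_minus_commute)
    have b: "\<bar>GG v x - Tmap v (hh v n) x\<bar> \<le> mu ^ (Suc n) / (1 - mu)" using GG_err[OF x, of "Suc n"] by (simp add: hh.simps)
    have c: "mu ^ Suc n \<le> mu ^ n" using mu by (simp add: power_le_one mult_left_le_one_le)
    have d: "mu * (mu ^ n / (1 - mu)) = mu ^ Suc n / (1 - mu)" by simp
    have e: "mu ^ Suc n / (1 - mu) \<le> mu ^ n / (1 - mu)" using c mu by (intro divide_right_mono) auto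
    have "\<bar>GG v x - Tmap v (GG v) x\<bar> \<le> \<bar>GG v x - Tmap v (hh v n) x\<bar> + \<bar>Tmap v (hh v n) x - Tmap v (GG v) x\<bar>"
      by linarith
    also have "\<dots> \<le> mu ^ n / (1 - mu) + mu ^ n / (1 - mu)" using a b d e u(2) by linarith
    finally show ?thesis by simp
  qed
  then have "\<bar>GG v x - Tmap v (GG v) x\<bar> \<le> 0" using geo_zero[OF _ mu] by blast
  then show ?thesis by simp
qed

end



lemma frac_L: "(b::real) \<noteq> 0 \<Longrightarrow> b - a \<noteq> 0 \<Longrightarrow> (a/b)/(1-a/b) = a/(b-a)"
  by (simp add: field_simps)

lemma frac_R: "(a::real) \<noteq> 0 \<Longrightarrow> b \<noteq> 0 \<Longrightarrow> 2 - 1/(a/b) = (2*a - b)/a"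
  by (simp add: field_simps)

context
  fixes v :: real
  assumes v: "0 < v" "v < 1"
begin

lemma GG_L: assumes "0 \<le> x" "x \<le> 1/2" shows "GG v x = v * GG v (x/(1-x))"
  using GG_fix[OF v, of x] assms by (simp add: Tmap_def)

lemma GG_R: assumes "1/2 \<le> x" "x \<le> 1" shows "GG v x = v + (1-v) * GG v (2 - 1/x)"
proof (cases "x = 1/2")
  case True
  have "GG v x = v * GG v (x/(1-x))" using GG_L True by simp
  also have "x/(1-x) = 1" unfolding True by simp
  also have "2 - 1/x = 0" unfolding True by simp
  ultimately show ?thesis by (simp add: GG_0[OF v] GG_1[OF v])
next
  case False
  then show ?thesis using GG_fix[OF v, of x] assms by (simp add: Tmap_def)
qed

lemma GG_med_aux:
  "\<forall>p q r s :: int. nat (q + s) = n \<and> 0 \<le> p \<and> 0 < q \<and> 0 < s \<and> r \<le> s \<and> r * q - p * s = 1 \<longrightarrow>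
     GG v (real_of_int (p + r) / real_of_int (q + s)) =
       (1 - v) * GG v (real_of_int p / real_of_int q) + v * GG v (real_of_int r / real_of_int s)"
proof (induction n rule: less_induct)
  case (less n)
  show ?case
  proof (intro allI impI)
    fix p q r s :: int
    assume H: "nat (q + s) = n \<and> 0 \<le> p \<and> 0 < q \<and> 0 < s \<and> r \<le> s \<and> r * q - p * s = 1"
    then have n: "nat (q + s) = n" and p0: "0 \<le> p" and q0: "0 < q" and s0: "0 < s" and rs: "r \<le> s"
      and det: "r * q - p * s = 1" by auto
    have ps0: "0 \<le> p * s" using p0 s0 by simp
    have r0: "0 < r"
    proof (rule ccontr)
      assume "\<not> 0 < r"
      then have "r * q \<le> 0" using q0 by (simp add: mult_nonpos_nonneg)
      then show False using det ps0 by linarith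
    qed
    have pq: "p < q"
    proof (rule ccontr)
      assume "\<not> p < q"
      then have "q * s \<le> p * s" using s0 by (simp add: mult_right_mono)
      moreover have "r * q \<le> s * q" using rs q0 by (simp add: mult_right_mono)
      ultimately show False using det by (simp add: mult.commute)
    qed
    define P where "P = real_of_int p"
    define Q where "Q = real_of_int q"
    define R where "R = real_of_int r"
    define S where "S = real_of_int s"
    have P0: "0 \<le> P" and Q0: "0 < Q" and S0: "0 < S" and R0: "0 < R" and RS: "R \<le> S" and PQ: "P < Q"
      using p0 q0 s0 r0 rs pq by (auto simp: P_def Q_def R_def S_def)
    have DET: "R * Q - P * S = 1" unfolding P_def Q_def R_def S_def using det
      by (metis of_int_1 of_int_diff of_int_mult)
    have ord: "P / Q < R / S" using DET Q0 S0 by (simp add: field_simps)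
    have goal_eq: "GG v ((P + R) / (Q + S)) = (1 - v) * GG v (P / Q) + v * GG v (R / S)"
    proof (cases "2 * r \<le> s")
      case True
      then have TR: "2 * R \<le> S" unfolding R_def S_def by (metis of_int_le_iff of_int_mult of_int_numeral)
      have m: "nat ((q - p) + (s - r)) < n" using n pq r0 p0 True by auto
      have IH: "GG v (real_of_int (p + r) / real_of_int ((q - p) + (s - r))) =
         (1 - v) * GG v (real_of_int p / real_of_int (q - p)) + v * GG v (real_of_int r / real_of_int (s - r))"
        by (rule less[OF m, rule_format]) (use pq r0 p0 True det in \<open>auto simp: algebra_simps\<close>)
      have e1: "real_of_int (p + r) / real_of_int ((q - p) + (s - r)) = ((P+R)/(Q+S)) / (1 - (P+R)/(Q+S))"
      proof -
        have "Q + S \<noteq> 0" "Q + S - (P + R) \<noteq> 0" using Q0 S0 PQ TR R0 by auto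
        then have c: "((P+R)/(Q+S)) / (1 - (P+R)/(Q+S)) = (P+R)/(Q+S-(P+R))" by (rule frac_L)
        have a: "real_of_int (p + r) = P + R" and b: "real_of_int ((q - p) + (s - r)) = Q+S-(P+R)"
          unfolding P_def Q_def R_def S_def by simp_all
        show ?thesis unfolding a b by (rule c[symmetric])
      qed
      have e2: "real_of_int p / real_of_int (q - p) = (P/Q) / (1 - P/Q)"
      proof -
        have c: "(P/Q) / (1 - P/Q) = P/(Q-P)" using Q0 PQ by (intro frac_L) auto
        show ?thesis unfolding c by (simp add: P_def Q_def)
      qed
      have e3: "real_of_int r / real_of_int (s - r) = (R/S) / (1 - R/S)"
      proof -
        have c: "(R/S) / (1 - R/S) = R/(S-R)" using S0 TR R0 by (intro frac_L) auto
        show ?thesis unfolding c by (simp add: R_def S_def)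
      qed
      have h1: "R / S \<le> 1/2" using TR S0 by (simp add: field_simps)
      have h2: "P / Q \<le> 1/2" using ord h1 by linarith
      have "2 * P \<le> Q" using h2 Q0 by (simp add: field_simps)
      then have h3: "(P + R) / (Q + S) \<le> 1/2" using TR Q0 S0 by (simp add: field_simps)
      have "GG v ((P + R) / (Q + S)) = v * GG v (((P+R)/(Q+S)) / (1 - (P+R)/(Q+S)))"
        using GG_L h3 P0 R0 Q0 S0 by simp
      also have "\<dots> = v * ((1 - v) * GG v ((P/Q) / (1 - P/Q)) + v * GG v ((R/S) / (1 - R/S)))"
        using IH e1 e2 e3 by simp
      also have "\<dots> = (1 - v) * (v * GG v ((P/Q) / (1 - P/Q))) + v * (v * GG v ((R/S) / (1 - R/S)))"
        by (simp add: algebra_simps)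
      also have "\<dots> = (1 - v) * GG v (P / Q) + v * GG v (R / S)"
        using GG_L[of "P/Q"] GG_L[of "R/S"] h1 h2 P0 Q0 R0 S0 by simp
      finally show ?thesis .
    next
      case False
      note F1 = False
      show ?thesis
      proof (cases "q \<le> 2 * p")
        case True
        then have TP: "Q \<le> 2 * P" unfolding P_def Q_def by (metis of_int_le_iff of_int_mult of_int_numeral)
        have p00: "0 < p" using True q0 by linarith
        have m: "nat (p + r) < n" using n pq rs q0 s0 p00 r0 by auto
        have IH: "GG v (real_of_int ((2*p - q) + (2*r - s)) / real_of_int (p + r)) =
          (1 - v) * GG v (real_of_int (2*p - q) / real_of_int p) + v * GG v (real_of_int (2*r - s) / real_of_int r)"
          by (rule less[OF m, rule_format]) (use p00 r0 True rs det in \<open>auto simp: algebra_simps\<close>)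
        have P00: "0 < P" using p00 P_def by simp
        have e1: "real_of_int ((2*p - q) + (2*r - s)) / real_of_int (p + r) = 2 - 1 / ((P+R)/(Q+S))"
        proof -
          have "P + R \<noteq> 0" "Q + S \<noteq> 0" using P00 Q0 S0 R0 by auto
          then have c: "2 - 1/((P+R)/(Q+S)) = (2*(P+R) - (Q+S))/(P+R)" by (rule frac_R)
          have a: "real_of_int (p + r) = P + R" and b: "real_of_int ((2*p - q) + (2*r - s)) = 2*(P+R) - (Q+S)"
            unfolding P_def Q_def R_def S_def by simp_all
          show ?thesis unfolding a b by (rule c[symmetric])
        qed
        have e2: "real_of_int (2*p - q) / real_of_int p = 2 - 1/(P/Q)"
        proof -
          have c: "2 - 1/(P/Q) = (2*P - Q)/P" using P00 Q0 by (intro frac_R) auto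
          show ?thesis unfolding c by (simp add: P_def Q_def)
        qed
        have e3: "real_of_int (2*r - s) / real_of_int r = 2 - 1/(R/S)"
        proof -
          have c: "2 - 1/(R/S) = (2*R - S)/R" using R0 S0 by (intro frac_R) auto
          show ?thesis unfolding c by (simp add: R_def S_def)
        qed
        have h1: "1/2 \<le> P / Q" "P/Q \<le> 1" using TP Q0 PQ by (simp_all add: field_simps)
        have h2: "1/2 \<le> R / S" "R/S \<le> 1" using ord h1 apply linarith using RS S0 by (simp add: field_simps)
        have h3: "1/2 \<le> (P + R) / (Q + S)" "(P + R) / (Q + S) \<le> 1"
          using h1 h2 Q0 S0 by (simp_all add: field_simps)
        have "GG v ((P + R) / (Q + S)) = v + (1-v) * GG v (2 - 1/((P+R)/(Q+S)))"
          using GG_R h3 by simp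
        also have "\<dots> = v + (1-v) * ((1 - v) * GG v (2 - 1/(P/Q)) + v * GG v (2 - 1/(R/S)))"
          using IH e1 e2 e3 by simp
        also have "\<dots> = (1 - v) * (v + (1-v) * GG v (2 - 1/(P/Q))) + v * (v + (1-v) * GG v (2 - 1/(R/S)))"
          by (simp add: algebra_simps)
        also have "\<dots> = (1 - v) * GG v (P / Q) + v * GG v (R / S)"
          using GG_R[of "P/Q"] GG_R[of "R/S"] h1 h2 by simp
        finally show ?thesis .
      next
        case False
        have a: "(s + 1) * q \<le> 2 * r * q" using F1 q0 by (intro mult_right_mono) auto
        have b: "2 * p * s \<le> (q - 1) * s" using False s0 by (intro mult_right_mono) auto
        have "q + s \<le> 2" using a b det by (simp add: algebra_simps)
        then have qs: "q = 1" "s = 1" using q0 s0 by auto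
        then have pr: "p = 0" "r = 1" using False p0 det by auto
        have "GG v (1/2) = v * GG v 1" using GG_L[of "1/2"] by simp
        then show ?thesis using qs pr GG_0[OF v] GG_1[OF v]
          unfolding P_def Q_def R_def S_def by simp
      qed
    qed
    then show "GG v (real_of_int (p + r) / real_of_int (q + s)) =
       (1 - v) * GG v (real_of_int p / real_of_int q) + v * GG v (real_of_int r / real_of_int s)"
      unfolding P_def Q_def R_def S_def by simp
  qed
qed

lemma GG_rule: "dtu_rule v (GG v)"
  unfolding dtu_rule_def
  using GG_cont[OF v] GG_0[OF v] GG_1[OF v] GG_med_aux by (auto simp: GG_def[of v x for x])

end



lemma rule_rat_aux:
  assumes f: "dtu_rule v f" and g: "dtu_rule v g"
  shows "\<forall>a b :: int. nat b = n \<and> 0 < b \<and> 0 \<le> a \<and> a \<le> b \<longrightarrow>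
           f (real_of_int a / real_of_int b) = g (real_of_int a / real_of_int b)"
proof (induction n rule: less_induct)
  case (less n)
  have f0: "f 0 = 0" "f 1 = 1" "g 0 = 0" "g 1 = 1" using f g unfolding dtu_rule_def by auto
  have fm: "\<And>p q r s. 0 \<le> p \<Longrightarrow> 0 < q \<Longrightarrow> 0 < s \<Longrightarrow> r \<le> s \<Longrightarrow> r * q - p * s = 1 \<Longrightarrow>
        f (real_of_int (p + r) / real_of_int (q + s)) =
          (1 - v) * f (real_of_int p / real_of_int q) + v * f (real_of_int r / real_of_int s)"
    using f unfolding dtu_rule_def by blast
  have gm: "\<And>p q r s. 0 \<le> p \<Longrightarrow> 0 < q \<Longrightarrow> 0 < s \<Longrightarrow> r \<le> s \<Longrightarrow> r * q - p * s = 1 \<Longrightarrow>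
        g (real_of_int (p + r) / real_of_int (q + s)) =
          (1 - v) * g (real_of_int p / real_of_int q) + v * g (real_of_int r / real_of_int s)"
    using g unfolding dtu_rule_def by blast
  show ?case
  proof (intro allI impI)
    fix a b :: int
    assume H: "nat b = n \<and> 0 < b \<and> 0 \<le> a \<and> a \<le> b"
    then have n: "nat b = n" and b0: "0 < b" and a0: "0 \<le> a" and ab: "a \<le> b" by auto
    show "f (real_of_int a / real_of_int b) = g (real_of_int a / real_of_int b)"
    proof (cases "gcd a b = 1")
      case False
      define d where "d = gcd a b"
      have d0: "0 < d" using b0 by (simp add: d_def)
      have "d \<noteq> 1" using False d_def by simp
      then have d1: "1 < d" using d0 by linarith
      have da: "d dvd a" and db: "d dvd b" by (simp_all add: d_def)
      obtain a' where a': "a = d * a'" using da by blast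
      obtain b' where b': "b = d * b'" using db by blast
      have b'0: "0 < b'" using b0 d0 b' by (simp add: zero_less_mult_iff)
      have a'0: "0 \<le> a'" using a0 d0 a' by (simp add: zero_le_mult_iff)
      have a'b': "a' \<le> b'" using ab d0 a' b' by simp
      have lt: "b' < b" using b' d1 b'0 by simp
      have m: "nat b' < n" using n lt b'0 by simp
      have eq: "real_of_int a / real_of_int b = real_of_int a' / real_of_int b'"
        using a' b' d0 by simp
      show ?thesis unfolding eq using less[OF m] b'0 a'0 a'b' by blast
    next
      case True
      show ?thesis
      proof (cases "b = 1")
        case True
        then have "a = 0 \<or> a = 1" using a0 ab by auto
        then show ?thesis using True f0 by auto
      next
        case False
        then have b2: "2 \<le> b" using b0 by simp
        have a1: "1 \<le> a"
        proof (rule ccontr)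
          assume "\<not> 1 \<le> a" then have "a = 0" using a0 by simp
          then show False using \<open>gcd a b = 1\<close> b2 by simp
        qed
        have ab1: "a < b"
        proof (rule ccontr)
          assume "\<not> a < b" then have "a = b" using ab by simp
          then show False using \<open>gcd a b = 1\<close> b2 by simp
        qed
        obtain u w where uw: "u * a + w * b = 1" using bezout_int[of a b] True by auto
        define q where "q = u mod b"
        have q0: "0 \<le> q" "q < b" using b0 by (simp_all add: q_def)
        have "(a * q) mod b = (a * u) mod b" unfolding q_def by (simp add: mod_mult_right_eq)
        also have "a * u = 1 - w * b" using uw by (simp add: algebra_simps)
        also have "(1 - w * b) mod b = 1 mod b" by (simp add: mod_diff_eq[symmetric])
        also have "1 mod b = 1" using b2 by simp
        finally have aq: "(a * q) mod b = 1" .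
        define p where "p = (a * q) div b"
        have apq: "a * q = p * b + 1" using aq div_mult_mod_eq[of "a*q" b] by (simp add: p_def algebra_simps)
        have qpos: "0 < q" using aq q0 by (cases "q = 0") auto
        have p0: "0 \<le> p" unfolding p_def using a0 q0 b0 by (simp add: pos_imp_zdiv_nonneg_iff)
        have pq: "p < q"
        proof -
          have "a * q \<le> b * q" using ab1 qpos by simp
          then have "p * b < q * b" using apq by (simp add: algebra_simps)
          then show ?thesis using b0 by simp
        qed
        define r where "r = a - p"
        define s where "s = b - q"
        have s0: "0 < s" using q0 by (simp add: s_def)
        have det: "r * q - p * s = 1" unfolding r_def s_def using apq by (simp add: algebra_simps)
        have rs: "r \<le> s"
        proof (rule ccontr)
          assume "\<not> r \<le> s"
          then have "(s + 1) * q \<le> r * q" using qpos by (intro mult_right_mono) auto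
          moreover have "p * s \<le> (q - 1) * s" using pq s0 by (intro mult_right_mono) auto
          ultimately show False using det qpos s0 by (simp add: algebra_simps)
        qed
        have r0: "0 < r"
        proof (rule ccontr)
          assume "\<not> 0 < r"
          then have "r * q \<le> 0" using qpos by (simp add: mult_nonpos_nonneg)
          moreover have "0 \<le> p * s" using p0 s0 by simp
          ultimately show False using det by linarith
        qed
        have ea: "a = p + r" "b = q + s" by (simp_all add: r_def s_def)
        have mq: "nat q < n" using n q0 by simp
        have ms: "nat s < n" using n qpos s0 b0 by (simp add: s_def)
        have IHq: "f (real_of_int p / real_of_int q) = g (real_of_int p / real_of_int q)"
          using less[OF mq] qpos p0 pq by auto
        have IHs: "f (real_of_int r / real_of_int s) = g (real_of_int r / real_of_int s)"
          using less[OF ms] s0 r0 rs by auto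
        show ?thesis unfolding ea
          using fm[OF p0 qpos s0 rs det] gm[OF p0 qpos s0 rs det] IHq IHs by simp
      qed
    qed
  qed
qed

lemma rule_unique:
  assumes f: "dtu_rule v f" and g: "dtu_rule v g"
  shows "f = g"
proof
  fix x :: real
  show "f x = g x"
  proof (cases "x \<in> {0..1}")
    case False
    then show ?thesis using f g unfolding dtu_rule_def by auto
  next
    case True
    define c where "c n = real_of_int \<lfloor>real (Suc n) * x\<rfloor> / real (Suc n)" for n
    have cin: "c n \<in> {0..1}" for n
    proof -
      have "0 \<le> \<lfloor>real (Suc n) * x\<rfloor>" using True by auto
      moreover have "\<lfloor>real (Suc n) * x\<rfloor> \<le> Suc n"
      proof -
        have "real (Suc n) * x \<le> real (Suc n)" by (rule mult_left_le) (use True in auto)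
        then have "\<lfloor>real (Suc n) * x\<rfloor> \<le> \<lfloor>real (Suc n)\<rfloor>" by (rule floor_mono)
        then show ?thesis by simp
      qed
      ultimately show ?thesis unfolding c_def by (auto simp: field_simps)
    qed
    have ceq: "f (c n) = g (c n)" for n
    proof -
      have "0 \<le> \<lfloor>real (Suc n) * x\<rfloor>" using True by auto
      moreover have "\<lfloor>real (Suc n) * x\<rfloor> \<le> int (Suc n)"
      proof -
        have "real (Suc n) * x \<le> real (Suc n)" by (rule mult_left_le) (use True in auto)
        then have "\<lfloor>real (Suc n) * x\<rfloor> \<le> \<lfloor>real (Suc n)\<rfloor>" by (rule floor_mono)
        then show ?thesis by simp
      qed
      moreover have R: "\<forall>a b :: int. nat b = Suc n \<and> 0 < b \<and> 0 \<le> a \<and> a \<le> b \<longrightarrow>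
           f (real_of_int a / real_of_int b) = g (real_of_int a / real_of_int b)" by (rule rule_rat_aux[OF f g])
      ultimately have "f (real_of_int \<lfloor>real (Suc n) * x\<rfloor> / real_of_int (int (Suc n))) =
          g (real_of_int \<lfloor>real (Suc n) * x\<rfloor> / real_of_int (int (Suc n)))"
        by (metis nat_int of_nat_0_less_iff zero_less_Suc)
      then show ?thesis unfolding c_def by simp
    qed
    have lim: "c \<longlonglongrightarrow> x"
    proof (rule tendsto_sandwich[where f="\<lambda>n. x - inverse (real (Suc n))" and h="\<lambda>n. x"])
      show "\<forall>\<^sub>F n in sequentially. x - inverse (real (Suc n)) \<le> c n"
      proof (intro always_eventually allI)
        fix n
        have "real (Suc n) * x - 1 \<le> real_of_int \<lfloor>real (Suc n) * x\<rfloor>" by linarith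
        then have "(real (Suc n) * x - 1) / real (Suc n) \<le> c n" unfolding c_def
          by (intro divide_right_mono) auto
        moreover have "(real (Suc n) * x - 1) / real (Suc n) = x - inverse (real (Suc n))"
          by (simp add: field_simps del: of_nat_Suc)
        ultimately show "x - inverse (real (Suc n)) \<le> c n" by simp
      qed
      show "\<forall>\<^sub>F n in sequentially. c n \<le> x"
      proof (intro always_eventually allI)
        fix n
        have "real_of_int \<lfloor>real (Suc n) * x\<rfloor> \<le> real (Suc n) * x" by linarith
        then show "c n \<le> x" unfolding c_def by (simp add: field_simps)
      qed
      show "(\<lambda>n. x - inverse (real (Suc n))) \<longlonglongrightarrow> x"
        using tendsto_diff[OF tendsto_const LIMSEQ_inverse_real_of_nat, of x] by simp
    qed simp
    have cf: "continuous_on {0..1} f" and cg: "continuous_on {0..1} g" using f g unfolding dtu_rule_def by auto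
    have l1: "(\<lambda>n. f (c n)) \<longlonglongrightarrow> f x"
      by (rule continuous_on_tendsto_compose[OF cf lim True]) (use cin in \<open>auto intro: always_eventually\<close>)
    have l2: "(\<lambda>n. g (c n)) \<longlonglongrightarrow> g x"
      by (rule continuous_on_tendsto_compose[OF cg lim True]) (use cin in \<open>auto intro: always_eventually\<close>)
    show ?thesis using l1 l2 ceq LIMSEQ_unique by auto
  qed
qed

lemma dtu_eq_GG: "0 < v \<Longrightarrow> v < 1 \<Longrightarrow> dtu v = GG v"
  unfolding dtu_def using GG_rule rule_unique by blast

lemma dtu_rule: "0 < v \<Longrightarrow> v < 1 \<Longrightarrow> dtu_rule v (dtu v)"
  using dtu_eq_GG GG_rule by simp

lemma dtu_mono: "0 < v \<Longrightarrow> v < 1 \<Longrightarrow> x \<in> {0..1} \<Longrightarrow> y \<in> {0..1} \<Longrightarrow> x \<le> y \<Longrightarrow> dtu v x \<le> dtu v y"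
  using dtu_eq_GG GG_mono by simp

lemma dtu_range: "0 < v \<Longrightarrow> v < 1 \<Longrightarrow> x \<in> {0..1} \<Longrightarrow> dtu v x \<in> {0..1}"
  using dtu_eq_GG GG_range by simp




lemma frac_G: "(Y::real) > 0 \<Longrightarrow> A * Y + X > 0 \<Longrightarrow> 1 / (A + X / Y) = Y / (A * Y + X)"
  by (simp add: field_simps)

lemma dtu_med:
  assumes v: "0 < v" "v < 1" and "0 \<le> p" "0 < q" "0 < s" "r \<le> s" "r * q - p * s = 1"
  shows "dtu v (real_of_int (p + r) / real_of_int (q + s)) =
          (1 - v) * dtu v (real_of_int p / real_of_int q) + v * dtu v (real_of_int r / real_of_int s)"
  using dtu_rule[OF v] assms(3-) unfolding dtu_rule_def by blast

lemma dtu_0: "0 < v \<Longrightarrow> v < 1 \<Longrightarrow> dtu v 0 = 0"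
  and dtu_1: "0 < v \<Longrightarrow> v < 1 \<Longrightarrow> dtu v 1 = 1"
  and dtu_cont: "0 < v \<Longrightarrow> v < 1 \<Longrightarrow> continuous_on {0..1} (dtu v)"
  and dtu_out: "0 < v \<Longrightarrow> v < 1 \<Longrightarrow> x \<notin> {0..1} \<Longrightarrow> dtu v x = 0"
  using dtu_rule unfolding dtu_rule_def by auto

lemma dtu_inv: assumes v: "0 < v" "v < 1" shows "1 \<le> a \<Longrightarrow> dtu v (1 / real a) = v ^ (a - 1)"
proof (induction a rule: dec_induct)
  case base then show ?case using dtu_1[OF v] by simp
next
  case (step a)
  have "dtu v (real_of_int (0 + 1) / real_of_int (1 + int a)) =
        (1 - v) * dtu v (real_of_int 0 / real_of_int 1) + v * dtu v (real_of_int 1 / real_of_int (int a))"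
    by (rule dtu_med[OF v]) (use step in auto)
  then have "dtu v (1 / (1 + real a)) = v * dtu v (1 / real a)" using dtu_0[OF v] by simp
  then show ?case using step by (simp add: power_eq_if)
qed

lemma GB:
  assumes v: "0 < v" "v < 1" and a: "1 \<le> a" and z: "z \<in> {0..1}"
  shows "dtu v (1 / (real a + z)) = v ^ (a - 1) - v ^ (a - 1) * (1 - v) * dtu (1 - v) z"
proof -
  define c where "c = v ^ (a - 1)"
  define k where "k = v ^ (a - 1) * (1 - v)"
  have c0: "0 < c" and k0: "0 < k" using v by (simp_all add: c_def k_def)
  define F where "F z = (if z \<in> {0..1} then (c - dtu v (1 / (real a + z))) / k else 0)" for z
  have v': "0 < 1 - v" "1 - v < 1" using v by auto
  have inab: "1 / (real a + z) \<in> {0..1}" if "z \<in> {0..1}" for z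
    using a that by (auto simp: field_simps)
  have ruleF: "dtu_rule (1 - v) F"
    unfolding dtu_rule_def
  proof (intro conjI allI impI)
    have "continuous_on {0..1} (\<lambda>z. (c - dtu v (1 / (real a + z))) / k)"
    proof -
      have "continuous_on {0..1} (\<lambda>z. 1 / (real a + z))"
        using a by (intro continuous_intros) auto
      then have "continuous_on {0..1} (\<lambda>z. dtu v (1 / (real a + z)))"
        using continuous_on_compose2[OF dtu_cont[OF v]] inab by blast
      then show ?thesis by (intro continuous_intros) (use k0 in auto)
    qed
    then show "continuous_on {0..1} F" by (rule continuous_on_eq) (simp add: F_def)
    show "F 0 = 0" using dtu_inv[OF v a] by (simp add: F_def c_def)
    have "dtu v (1 / (real a + 1)) = v ^ a" using dtu_inv[OF v, of "a+1"] by (simp add: add.commute)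
    moreover have "v ^ a = c * v" using a by (cases a) (simp_all add: c_def mult.commute)
    ultimately have "F 1 = (c - c * v) / k" by (simp add: F_def)
    moreover have "c - c * v = k" by (simp add: k_def c_def algebra_simps)
    ultimately show "F 1 = 1" using k0 by simp
    show "\<And>x. x \<notin> {0..1} \<Longrightarrow> F x = 0" by (auto simp: F_def)
  next
    fix p q r s :: int
    assume H: "0 \<le> p \<and> 0 < q \<and> 0 < s \<and> r \<le> s \<and> r * q - p * s = 1"
    then have p0: "0 \<le> p" and q0: "0 < q" and s0: "0 < s" and rs: "r \<le> s" and det: "r * q - p * s = 1" by auto
    have r0: "0 < r"
    proof (rule ccontr)
      assume "\<not> 0 < r"
      then have "r * q \<le> 0" using q0 by (simp add: mult_nonpos_nonneg)
      moreover have "0 \<le> p * s" using p0 s0 by simp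
      ultimately show False using det by linarith
    qed
    have pq: "p < q"
    proof (rule ccontr)
      assume "\<not> p < q"
      then have "q * s \<le> p * s" using s0 by (simp add: mult_right_mono)
      moreover have "r * q \<le> s * q" using rs q0 by (simp add: mult_right_mono)
      ultimately show False using det by (simp add: mult.commute)
    qed
    define P where "P = real_of_int p"
    define Q where "Q = real_of_int q"
    define R where "R = real_of_int r"
    define S where "S = real_of_int s"
    define A where "A = real a"
    have P0: "0 \<le> P" and Q0: "0 < Q" and S0: "0 < S" and R0: "0 < R" and RS: "R \<le> S" and PQ: "P < Q"
      using p0 q0 s0 r0 rs pq by (auto simp: P_def Q_def R_def S_def)
    have A1: "1 \<le> A" using a by (simp add: A_def)
    have in1: "P / Q \<in> {0..1}" "R / S \<in> {0..1}" "(P + R) / (Q + S) \<in> {0..1}"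
      using P0 Q0 S0 R0 RS PQ by (auto simp: field_simps)
    have med: "dtu v (real_of_int (s + q) / real_of_int ((int a * s + r) + (int a * q + p))) =
       (1 - v) * dtu v (real_of_int s / real_of_int (int a * s + r)) + v * dtu v (real_of_int q / real_of_int (int a * q + p))"
    proof (rule dtu_med[OF v])
      show "0 \<le> s" using s0 by simp
      show "0 < int a * s + r" using a s0 r0 by (simp add: add_pos_pos)
      show "0 < int a * q + p" using a q0 p0 by (simp add: add_pos_nonneg)
      have "q \<le> int a * q" using a q0 by simp
      then show "q \<le> int a * q + p" using p0 by simp
      show "q * (int a * s + r) - s * (int a * q + p) = 1" using det by (simp add: algebra_simps)
    qed
    have e1: "real_of_int (s + q) / real_of_int ((int a * s + r) + (int a * q + p)) = 1 / (A + (P + R) / (Q + S))"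
    proof -
      have "1 / (A + (P + R) / (Q + S)) = (Q + S) / (A * (Q + S) + (P + R))"
        using Q0 S0 P0 R0 A1 by (intro frac_G) (auto intro: add_pos_nonneg)
      then show ?thesis unfolding P_def Q_def R_def S_def A_def by (simp add: algebra_simps)
    qed
    have e2: "real_of_int s / real_of_int (int a * s + r) = 1 / (A + R / S)"
    proof -
      have "1 / (A + R / S) = S / (A * S + R)"
        using S0 R0 A1 by (intro frac_G) (auto intro: add_pos_nonneg)
      then show ?thesis unfolding R_def S_def A_def by (simp add: algebra_simps)
    qed
    have e3: "real_of_int q / real_of_int (int a * q + p) = 1 / (A + P / Q)"
    proof -
      have "1 / (A + P / Q) = Q / (A * Q + P)"
        using Q0 P0 A1 by (intro frac_G) (auto intro: add_pos_nonneg)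
      then show ?thesis unfolding P_def Q_def A_def by (simp add: algebra_simps)
    qed
    have M: "dtu v (1 / (A + (P + R) / (Q + S))) = (1 - v) * dtu v (1 / (A + R / S)) + v * dtu v (1 / (A + P / Q))"
      using med e1 e2 e3 by simp
    have "F ((P + R) / (Q + S)) = (c - dtu v (1 / (A + (P + R) / (Q + S)))) / k"
      using in1 by (simp add: F_def A_def)
    also have "\<dots> = (1 - (1 - v)) * ((c - dtu v (1 / (A + P / Q))) / k) + (1 - v) * ((c - dtu v (1 / (A + R / S))) / k)"
      unfolding M using k0 by (simp add: field_simps)
    also have "\<dots> = (1 - (1 - v)) * F (P / Q) + (1 - v) * F (R / S)"
      using in1 by (simp add: F_def A_def)
    finally show "F (real_of_int (p + r) / real_of_int (q + s)) =
          (1 - (1 - v)) * F (real_of_int p / real_of_int q) + (1 - v) * F (real_of_int r / real_of_int s)"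
      unfolding P_def Q_def R_def S_def by simp
  qed
  have "F = dtu (1 - v)" using rule_unique[OF ruleF dtu_rule[OF v']] .
  then have "dtu (1 - v) z = F z" by simp
  then have "dtu (1 - v) z = (c - dtu v (1 / (real a + z))) / k" using z by (simp add: F_def)
  then have "k * dtu (1 - v) z = c - dtu v (1 / (real a + z))" using k0 by (simp add: field_simps)
  then show ?thesis unfolding c_def k_def by linarith
qed




definition LL :: real where "LL = 1 / ((1 + sqrt 5) / 2)"

lemma sqrt5_bounds: "2.236 < sqrt 5" "sqrt 5 < 2.2361"
  by (rule real_less_rsqrt; simp add: power2_eq_square) (rule real_less_lsqrt; simp add: power2_eq_square)

lemma LL_eq: "LL = (sqrt 5 - 1) / 2"
proof -
  have "(1 + sqrt 5) * (sqrt 5 - 1) = 4" by (simp add: algebra_simps)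
  then show ?thesis unfolding LL_def using sqrt5_bounds by (simp add: field_simps)
qed

lemma LL_bounds: "0.618 < LL" "LL < 0.61805" using sqrt5_bounds LL_eq by auto

lemma LL_sq_aux: "(s::real) * s = 5 \<Longrightarrow> 1 - (s - 1) / 2 = ((s - 1) / 2) ^ 2"
proof -
  assume h: "s * s = 5"
  have "((s - 1) / 2) ^ 2 - (1 - (s - 1) / 2) = (s * s - 5) / 4" by (simp add: field_simps power2_eq_square)
  then show ?thesis using h by simp
qed

lemma LL_sq: "1 - LL = LL ^ 2"
  unfolding LL_eq by (rule LL_sq_aux) simp

lemma LL01: "0 < LL" "LL < 1" using LL_bounds by auto

definition yy :: real where "yy = (sqrt 21 - 3) / 2"

lemma sqrt21_bounds: "4.58 < sqrt 21" "sqrt 21 < 4.59"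
  by (rule real_less_rsqrt; simp add: power2_eq_square) (rule real_less_lsqrt; simp add: power2_eq_square)

lemma yy_bounds: "0.79 < yy" "yy < 0.795" using sqrt21_bounds unfolding yy_def by auto

lemma yy_eq_aux: "(s::real) * s = 21 \<Longrightarrow> ((s - 3) / 2) * ((s - 3) / 2) + 3 * ((s - 3) / 2) - 3 = 0"
proof -
  assume h: "s * s = 21"
  have "((s - 3) / 2) * ((s - 3) / 2) + 3 * ((s - 3) / 2) - 3 = (s * s - 21) / 4" by (simp add: field_simps)
  then show ?thesis using h by simp
qed

lemma yy_eq: "yy * yy + 3 * yy - 3 = 0"
  unfolding yy_def by (rule yy_eq_aux) simp

lemma yy_irrat: "yy \<notin> \<rat>"
proof
  assume "yy \<in> \<rat>"
  then obtain a b :: int where b0: "b > 0" and cop: "coprime a b" and ab: "yy = of_int a / of_int b"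
    by (rule Rats_cases') auto
  have "real_of_int a * real_of_int a + 3 * real_of_int a * real_of_int b - 3 * real_of_int b * real_of_int b = 0"
    using yy_eq b0 unfolding ab by (simp add: field_simps)
  then have "real_of_int (a * a + 3 * a * b - 3 * b * b) = 0" by simp
  then have "a * a + 3 * a * b - 3 * b * b = 0" by (simp only: of_int_eq_0_iff)
  then have "a * a = b * (3 * b - 3 * a)" by (simp add: algebra_simps)
  then have "b dvd a * a" by (metis dvd_triv_left)
  then have "b dvd a" using cop by (metis coprime_commute coprime_dvd_mult_left_iff)
  then have "is_unit b" using cop by (metis coprime_common_divisor dvd_refl)
  then have "b = 1" using b0 by simp
  then have "0 < real_of_int a" "real_of_int a < 1" using yy_bounds ab by auto
  then have "0 < a" "a < 1" by simp_all
  then show False by simp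
qed

definition zz :: real where "zz = 1 / (3 + yy)"

lemma zz_bounds: "0 < zz" "zz < 1" using yy_bounds unfolding zz_def by auto

lemma inv_yy: "1 / yy = 1 + zz"
proof -
  have "yy * (4 + yy) = 3 + yy" using yy_eq by (simp add: algebra_simps)
  then show ?thesis using yy_bounds unfolding zz_def by (simp add: field_simps)
qed

lemma gauss_yy: "gauss_map yy = zz"
proof -
  have "\<lfloor>1 + zz\<rfloor> = 1" using zz_bounds by (simp add: floor_eq_iff)
  then have "frac (1 + zz) = zz" by (simp add: frac_def)
  then show ?thesis unfolding gauss_map_def inv_yy by simp
qed

lemma gauss_zz: "gauss_map zz = yy"
proof -
  have "1 / zz = 3 + yy" unfolding zz_def by simp
  moreover have "\<lfloor>3 + yy\<rfloor> = 3" using yy_bounds by (simp add: floor_eq_iff)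
  then have "frac (3 + yy) = yy" by (simp add: frac_def)
  ultimately show ?thesis unfolding gauss_map_def by simp
qed

lemma iter_yy: "(gauss_map ^^ n) yy = (if even n then yy else zz)"
  by (induction n) (auto simp: gauss_yy gauss_zz)

lemma cf_yy: "cf_pq yy n \<le> 3"
proof -
  have "\<lfloor>1 / yy\<rfloor> = 1" unfolding inv_yy using zz_bounds by (simp add: floor_eq_iff)
  moreover have "\<lfloor>1 / zz\<rfloor> = 3" using yy_bounds unfolding zz_def by (simp add: floor_eq_iff)
  ultimately show ?thesis unfolding cf_pq_def iter_yy by auto
qed




lemma yyb: "79/100 < yy" "yy < 159/200" using yy_bounds by simp_all

definition Mm :: "real \<Rightarrow> real" where "Mm u = (3 + u) / (4 + u)"
definition BB :: real where "BB = (1 - LL) ^ 3 * LL"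

lemma BB_small: "25 * BB < 1" "0 < BB"
proof -
  have "BB = LL ^ 7" unfolding BB_def LL_sq by (simp add: eval_nat_numeral)
  moreover have "LL ^ 7 < 0.61805 ^ 7" using LL_bounds by (intro power_strict_mono) auto
  moreover have "(0.61805::real) ^ 7 < 1/25" by (simp add: eval_nat_numeral)
  ultimately show "25 * BB < 1" by simp
  show "0 < BB" using LL01 unfolding BB_def by simp
qed

lemma gM: assumes u: "u \<in> {0..1}" shows "dtu LL (Mm u) = 1 - (1 - LL) ^ 3 + BB * dtu LL u"
proof -
  have v1: "0 < LL" "LL < 1" and v2: "0 < 1 - LL" "1 - LL < 1" using LL01 by auto
  have z: "1 / (real 3 + u) \<in> {0..1}" using u by auto
  have e: "Mm u = 1 / (real 1 + 1 / (real 3 + u))" using u unfolding Mm_def by (simp add: field_simps)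
  have "dtu LL (Mm u) = LL ^ (1 - 1) - LL ^ (1 - 1) * (1 - LL) * dtu (1 - LL) (1 / (real 3 + u))"
    unfolding e by (rule GB[OF v1 _ z]) simp
  also have "dtu (1 - LL) (1 / (real 3 + u)) = (1 - LL) ^ (3 - 1) - (1 - LL) ^ (3 - 1) * (1 - (1 - LL)) * dtu (1 - (1 - LL)) u"
    by (rule GB[OF v2 _ u]) simp
  finally show ?thesis unfolding BB_def by (simp add: algebra_simps power2_eq_square power3_eq_cube)
qed

lemma Mm_yy: "Mm yy = yy"
proof -
  have "yy * (4 + yy) = 3 + yy" using yy_eq by (simp add: algebra_simps)
  then show ?thesis unfolding Mm_def using yy_bounds by (simp add: field_simps)
qed

lemma Mm_diff: "w \<ge> 0 \<Longrightarrow> y \<ge> 0 \<Longrightarrow> Mm w - Mm y = (w - y) / ((4 + w) * (4 + y))"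
  unfolding Mm_def by (simp add: field_simps)

definition WW :: "real \<Rightarrow> real" where "WW u = \<bar>dtu LL u - dtu LL yy\<bar> / \<bar>u - yy\<bar>"

lemma WW_far: assumes u: "u \<in> {0..1}" and far: "1/200 \<le> \<bar>u - yy\<bar>"
  and m: "m = 0 \<or> \<bar>u - yy\<bar> < (1/200) / 25 ^ m"
  shows "WW u \<le> (25 * BB) ^ m * 200"
proof -
  have "m = 0"
  proof (rule ccontr)
    assume "m \<noteq> 0"
    then have "\<bar>u - yy\<bar> < (1/200) / 25 ^ m" using m by simp
    moreover have "(1/200) / 25 ^ m \<le> (1/200::real)" by (simp add: field_simps)
    ultimately show False using far by simp
  qed
  have yin: "yy \<in> {0..1}" using yy_bounds by auto
  have "\<bar>dtu LL u - dtu LL yy\<bar> \<le> 1" using dtu_range[OF LL01 u] dtu_range[OF LL01 yin] by auto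
  then have "WW u \<le> 1 / (1/200)" unfolding WW_def using far
    by (intro frac_le) auto
  then show ?thesis using \<open>m = 0\<close> by simp
qed

lemma WW_step:
  assumes u: "u \<in> {0..1}" and uy: "u \<noteq> yy" and near: "\<bar>u - yy\<bar> < 1/200"
  obtains w where "w \<in> {0..1}" "w \<noteq> yy" "16 * \<bar>u - yy\<bar> \<le> \<bar>w - yy\<bar>" "\<bar>w - yy\<bar> \<le> 25 * \<bar>u - yy\<bar>"
    "WW u \<le> 25 * BB * WW w"
proof -
  have h: "-(1/200) < u - yy" "u - yy < 1/200" using near by (simp_all only: abs_less_iff) auto
  have ub: "3/4 < u" "u < 4/5" using h yyb by linarith+
  define w where "w = (4 * u - 3) / (1 - u)"
  have w: "w \<in> {0..1}" using ub unfolding w_def by (auto simp: field_simps)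
  have Mw: "Mm w = u" using ub unfolding w_def Mm_def by (simp add: field_simps)
  have d: "u - yy = (w - yy) / ((4 + w) * (4 + yy))"
    using Mm_diff[of w yy] w yy_bounds Mw Mm_yy by auto
  have wy: "w \<noteq> yy" using d uy by auto
  define D where "D = (4 + w) * (4 + yy)"
  have D: "16 \<le> D" "D \<le> 25"
  proof -
    show "16 \<le> D" unfolding D_def using w yy_bounds by (intro order_trans[OF _ mult_mono[of 4 "4+w" 4 "4+yy"]]) auto
    show "D \<le> 25" unfolding D_def using w yy_bounds by (intro order_trans[OF mult_mono[of "4+w" 5 "4+yy" 5]]) auto
  qed
  have d2: "\<bar>w - yy\<bar> = D * \<bar>u - yy\<bar>" unfolding d D_def using w yy_bounds by (simp add: abs_mult)
  have l1: "16 * \<bar>u - yy\<bar> \<le> \<bar>w - yy\<bar>" unfolding d2 using D by (intro mult_right_mono) auto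
  have l2: "\<bar>w - yy\<bar> \<le> 25 * \<bar>u - yy\<bar>" unfolding d2 using D by (intro mult_right_mono) auto
  have yin: "yy \<in> {0..1}" using yy_bounds by auto
  have gd: "dtu LL u - dtu LL yy = BB * (dtu LL w - dtu LL yy)"
    using gM[OF w] gM[OF yin] Mw Mm_yy by (simp add: algebra_simps)
  have "WW u = BB * \<bar>dtu LL w - dtu LL yy\<bar> / \<bar>u - yy\<bar>"
    unfolding WW_def gd using BB_small by (simp add: abs_mult)
  also have "\<dots> = BB * D * WW w" unfolding WW_def d2 using uy wy D by (simp add: field_simps)
  also have "\<dots> \<le> BB * 25 * WW w"
    using D BB_small by (intro mult_right_mono mult_left_mono) (auto simp: WW_def)
  finally have "WW u \<le> 25 * BB * WW w" by (simp add: algebra_simps)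
  then show ?thesis using that w wy l1 l2 by blast
qed

lemma WW_bound:
  "\<forall>u\<in>{0..1}. u \<noteq> yy \<longrightarrow> (1/200) / 16 ^ n \<le> \<bar>u - yy\<bar> \<longrightarrow>
     (\<forall>m. (m = 0 \<or> \<bar>u - yy\<bar> < (1/200) / 25 ^ m) \<longrightarrow> WW u \<le> (25 * BB) ^ m * 200)"
proof (induction n)
  case 0
  then show ?case using WW_far by simp
next
  case (Suc n)
  show ?case
  proof (intro ballI impI allI)
    fix u m assume u: "u \<in> {0..1}" and uy: "u \<noteq> yy" and lo: "(1/200) / 16 ^ Suc n \<le> \<bar>u - yy\<bar>"
      and m: "m = 0 \<or> \<bar>u - yy\<bar> < (1/200) / 25 ^ m"
    show "WW u \<le> (25 * BB) ^ m * 200"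
    proof (cases "1/200 \<le> \<bar>u - yy\<bar>")
      case True then show ?thesis using WW_far u m by blast
    next
      case False
      then obtain w where w: "w \<in> {0..1}" "w \<noteq> yy" "16 * \<bar>u - yy\<bar> \<le> \<bar>w - yy\<bar>" "\<bar>w - yy\<bar> \<le> 25 * \<bar>u - yy\<bar>"
        "WW u \<le> 25 * BB * WW w" using WW_step[OF u uy] by force
      have "(1/200) / 16 ^ n = 16 * ((1/200) / (16::real) ^ Suc n)" by simp
      also have "\<dots> \<le> 16 * \<bar>u - yy\<bar>" using lo by simp
      finally have lo': "(1/200) / 16 ^ n \<le> \<bar>w - yy\<bar>" using w(3) by linarith
      have IH: "\<And>m. m = 0 \<or> \<bar>w - yy\<bar> < (1/200) / 25 ^ m \<Longrightarrow> WW w \<le> (25 * BB) ^ m * 200"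
        using Suc w(1,2) lo' by blast
      have B0: "0 \<le> 25 * BB" using BB_small by simp
      show ?thesis
      proof (cases m)
        case 0
        have "WW w \<le> 200" using IH[of 0] by simp
        then have "25 * BB * WW w \<le> 25 * BB * 200" using B0 by (intro mult_left_mono) auto
        also have "\<dots> \<le> 200" using BB_small by simp
        finally show ?thesis using w(5) 0 by simp
      next
        case (Suc m')
        then have "\<bar>u - yy\<bar> < (1/200) / 25 ^ Suc m'" using m by simp
        then have "25 * \<bar>u - yy\<bar> < 25 * ((1/200) / 25 ^ Suc m')" by simp
        moreover have "25 * ((1/200)/(25::real)^Suc m') = (1/200)/25^m'" by simp
        ultimately have "25 * \<bar>u - yy\<bar> < (1/200)/25^m'" by simp
        then have "\<bar>w - yy\<bar> < (1/200) / 25 ^ m'" using w(4) by (rule le_less_trans[rotated])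
        then have "WW w \<le> (25 * BB) ^ m' * 200" using IH by blast
        then have "25 * BB * WW w \<le> 25 * BB * ((25 * BB) ^ m' * 200)" using B0 by (intro mult_left_mono) auto
        then show ?thesis using w(5) Suc by (simp add: algebra_simps)
      qed
    qed
  qed
qed

lemma deriv_yy: "(dtu LL has_real_derivative 0) (at yy)"
  unfolding has_field_derivative_iff
proof (rule LIM_I)
  fix r :: real assume r: "0 < r"
  obtain m where m: "(25 * BB) ^ m < r / 200" using real_arch_pow_inv[of "r/200" "25 * BB"] r BB_small by auto
  show "\<exists>s>0. \<forall>x. x \<noteq> yy \<and> norm (x - yy) < s \<longrightarrow> norm ((dtu LL x - dtu LL yy) / (x - yy) - 0) < r"
  proof (intro exI conjI allI impI)
    show "0 < (1/200) / (25::real) ^ m" by simp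
    fix x assume x: "x \<noteq> yy \<and> norm (x - yy) < (1/200) / 25 ^ m"
    have small: "(1/200) / (25::real) ^ m \<le> 1/200" by (simp add: field_simps)
    have "norm (x - yy) < 1/200" using x small by linarith
    then have "\<bar>x - yy\<bar> < 1/200" by simp
    then have h: "-(1/200) < x - yy" "x - yy < 1/200" by (simp_all only: abs_less_iff) auto
    have xin: "x \<in> {0..1}" using h yyb by simp
    have pos: "0 < \<bar>x - yy\<bar>" using x by simp
    obtain n where n: "200 / \<bar>x - yy\<bar> < 16 ^ n" using real_arch_pow[of 16 "200 / \<bar>x - yy\<bar>"] by auto
    have lo: "(1/200) / 16 ^ n \<le> \<bar>x - yy\<bar>" using n pos by (simp add: field_simps)
    have "WW x \<le> (25 * BB) ^ m * 200" using WW_bound[of n] xin x lo by auto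
    also have "\<dots> < r" using m by simp
    finally have "WW x < r" .
    then show "norm ((dtu LL x - dtu LL yy) / (x - yy) - 0) < r" by (simp add: WW_def abs_divide)
  qed
qed




definition xs :: "real \<Rightarrow> nat \<Rightarrow> real" where "xs x k = (gauss_map ^^ k) x"

lemma xs_Suc: "xs x (Suc k) = frac (1 / xs x k)"
  by (simp add: xs_def gauss_map_def)

lemma xs_basic:
  assumes "0 < x" "x < 1" "x \<notin> \<rat>"
  shows "0 < xs x k \<and> xs x k < 1 \<and> xs x k \<notin> \<rat>"
proof (induction k)
  case 0 then show ?case using assms by (simp add: xs_def)
next
  case (Suc k)
  let ?u = "1 / xs x k"
  have u: "?u \<notin> \<rat>"
  proof
    assume "?u \<in> \<rat>"
    then have "1 / ?u \<in> \<rat>" by (rule Rats_divide[OF Rats_1])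
    then show False using Suc by simp
  qed
  have fi: "frac ?u \<notin> \<rat>"
  proof
    assume "frac ?u \<in> \<rat>"
    then have "frac ?u + of_int \<lfloor>?u\<rfloor> \<in> \<rat>" by (intro Rats_add) auto
    then show False using u by (simp add: frac_def)
  qed
  have "frac ?u \<noteq> 0" using fi Rats_0 by metis
  then have "0 < frac ?u" using frac_ge_0[of ?u] by linarith
  then show ?case using fi frac_lt_1[of ?u] by (simp add: xs_Suc)
qed

definition dg :: "real \<Rightarrow> nat \<Rightarrow> nat" where "dg x k = cf_pq x k"

lemma dg_eq: "dg x k = nat \<lfloor>1 / xs x k\<rfloor>" by (simp add: dg_def cf_pq_def xs_def)

lemma dg_props:
  assumes "0 < x" "x < 1" "x \<notin> \<rat>"
  shows "1 \<le> dg x k" "xs x k = 1 / (real (dg x k) + xs x (Suc k))"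
proof -
  have b: "0 < xs x k" "xs x k < 1" using xs_basic[OF assms] by auto
  then have "1 < 1 / xs x k" by simp
  then have f1: "1 \<le> \<lfloor>1 / xs x k\<rfloor>" by (simp add: le_floor_iff)
  then show "1 \<le> dg x k" unfolding dg_eq by linarith
  have "0 \<le> \<lfloor>1 / xs x k\<rfloor>" using f1 by linarith
  from of_nat_nat[OF this] have "real (dg x k) = of_int \<lfloor>1 / xs x k\<rfloor>" unfolding dg_eq by simp
  then have "real (dg x k) + xs x (Suc k) = 1 / xs x k" by (simp add: xs_Suc frac_def)
  then show "xs x k = 1 / (real (dg x k) + xs x (Suc k))" using b by simp
qed

lemma xs_range:
  assumes "0 < x" "x < 1" "x \<notin> \<rat>" and cf: "\<forall>n. cf_pq x n \<le> 2"
  shows "1/3 < xs x k \<and> xs x k < 3/4"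
proof -
  have b: "\<And>j. 0 < xs x j \<and> xs x j < 1" using xs_basic[OF assms(1-3)] by auto
  have d: "\<And>j. 1 \<le> dg x j \<and> dg x j \<le> 2" using dg_props(1)[OF assms(1-3)] cf by (auto simp: dg_def)
  have lo: "\<And>j. 1/3 < xs x j"
  proof -
    fix j
    have "real (dg x j) + xs x (Suc j) < 3" using d[of j] b[of "Suc j"] by linarith
    moreover have "0 < real (dg x j) + xs x (Suc j)" using d[of j] b[of "Suc j"] by linarith
    ultimately show "1/3 < xs x j" unfolding dg_props(2)[OF assms(1-3), of j] by (simp add: field_simps)
  qed
  have "xs x k < 3/4"
  proof (cases "dg x k = 1")
    case True
    have "4/3 < 1 + xs x (Suc k)" using lo[of "Suc k"] by simp
    then show ?thesis unfolding dg_props(2)[OF assms(1-3), of k] True by (simp add: field_simps)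
  next
    case False
    then have "dg x k = 2" using d[of k] by simp
    then show ?thesis unfolding dg_props(2)[OF assms(1-3), of k] using b[of "Suc k"] by (simp add: field_simps)
  qed
  then show ?thesis using lo by simp
qed




primrec cpair :: "(nat \<Rightarrow> real) \<Rightarrow> real \<times> real \<Rightarrow> nat \<Rightarrow> real \<times> real" where
  "cpair dd i 0 = i"
| "cpair dd i (Suc k) = (dd k * fst (cpair dd i k) + snd (cpair dd i k), fst (cpair dd i k))"

definition "Qn dd k = fst (cpair dd (1,0) k)"
definition "Qp dd k = snd (cpair dd (1,0) k)"
definition "Pn dd k = fst (cpair dd (0,1) k)"
definition "Pp dd k = snd (cpair dd (0,1) k)"

lemma Qn_Suc: "Qn dd (Suc k) = dd k * Qn dd k + Qp dd k" and Qp_Suc: "Qp dd (Suc k) = Qn dd k"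
  and Pn_Suc: "Pn dd (Suc k) = dd k * Pn dd k + Pp dd k" and Pp_Suc: "Pp dd (Suc k) = Pn dd k"
  by (simp_all add: Qn_def Qp_def Pn_def Pp_def)

lemma Q0: "Qn dd 0 = 1" "Qp dd 0 = 0" "Pn dd 0 = 0" "Pp dd 0 = 1"
  by (simp_all add: Qn_def Qp_def Pn_def Pp_def)

primrec psi :: "(nat \<Rightarrow> real) \<Rightarrow> nat \<Rightarrow> real \<Rightarrow> real" where
  "psi dd 0 z = z"
| "psi dd (Suc k) z = psi dd k (1 / (dd k + z))"

lemma frac_mob: assumes t: "(t::real) \<noteq> 0" and y: "C * t + D \<noteq> 0"
  shows "(A + 1 / t * B) / (C + 1 / t * D) = (A * t + B) / (C * t + D)"
proof -
  have e1: "A + 1/t*B = (A*t+B)/t" and e2: "C + 1/t*D = (C*t+D)/t" using t by (simp_all add: field_simps)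
  have "((A*t+B)/t) / ((C*t+D)/t) = (A*t+B)/(C*t+D)" using t y by (simp add: divide_divide_eq_left divide_divide_eq_right)
  then show ?thesis unfolding e1 e2 .
qed

context
  fixes dd :: "nat \<Rightarrow> real"
  assumes dd1: "\<And>k. 1 \<le> dd k"
begin

lemma Q_pos: "1 \<le> Qn dd k \<and> 0 \<le> Qp dd k \<and> Qp dd k \<le> Qn dd k"
proof (induction k)
  case 0 then show ?case by (simp add: Q0)
next
  case (Suc k)
  have "1 * Qn dd k \<le> dd k * Qn dd k" using dd1[of k] Suc by (intro mult_right_mono) auto
  then have h: "Qn dd k \<le> dd k * Qn dd k" by simp
  show ?case unfolding Qn_Suc Qp_Suc using h Suc by (intro conjI; linarith)
qed

lemma Qn_mono: "Qn dd k \<le> Qn dd (Suc k)"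
proof -
  have "1 * Qn dd k \<le> dd k * Qn dd k" using dd1[of k] Q_pos[of k] by (intro mult_right_mono) auto
  then have h: "Qn dd k \<le> dd k * Qn dd k" by simp
  show ?thesis unfolding Qn_Suc using h Q_pos[of k] by linarith
qed

lemma psi_formula: "0 \<le> z \<Longrightarrow> psi dd k z = (Pn dd k + z * Pp dd k) / (Qn dd k + z * Qp dd k)"
proof (induction k arbitrary: z)
  case 0 then show ?case by (simp add: Q0)
next
  case (Suc k)
  have dz: "0 < dd k + z" using dd1[of k] Suc.prems by linarith
  have nz: "0 \<le> 1 / (dd k + z)" using dz by simp
  have "psi dd (Suc k) z = (Pn dd k + 1 / (dd k + z) * Pp dd k) / (Qn dd k + 1 / (dd k + z) * Qp dd k)"
    using Suc.IH[OF nz] by simp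
  also have "\<dots> = (Pn dd k * (dd k + z) + Pp dd k) / (Qn dd k * (dd k + z) + Qp dd k)"
  proof (rule frac_mob)
    show "dd k + z \<noteq> 0" using dz by simp
    have "1 * Qn dd k \<le> (dd k + z) * Qn dd k" using dz dd1[of k] Suc.prems Q_pos[of k] by (intro mult_right_mono) auto
    then have "Qn dd k \<le> Qn dd k * (dd k + z)" by (simp add: mult.commute)
    then show "Qn dd k * (dd k + z) + Qp dd k \<noteq> 0" using Q_pos[of k] by linarith
  qed
  also have "\<dots> = (Pn dd (Suc k) + z * Pp dd (Suc k)) / (Qn dd (Suc k) + z * Qp dd (Suc k))"
    by (simp add: Pn_Suc Pp_Suc Qn_Suc Qp_Suc algebra_simps)
  finally show ?case .
qed

lemma det: "Pp dd k * Qn dd k - Pn dd k * Qp dd k = (-1) ^ k"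
proof (induction k)
  case 0 then show ?case by (simp add: Q0)
next
  case (Suc k)
  have "Pp dd (Suc k) * Qn dd (Suc k) - Pn dd (Suc k) * Qp dd (Suc k) = - (Pp dd k * Qn dd k - Pn dd k * Qp dd k)"
    by (simp add: Pn_Suc Pp_Suc Qn_Suc Qp_Suc algebra_simps)
  then show ?case using Suc by simp
qed

lemma den_pos: "0 \<le> z \<Longrightarrow> Qn dd k \<le> Qn dd k + z * Qp dd k"
  using Q_pos[of k] by simp

lemma psi_diff: assumes "0 \<le> z" "0 \<le> w"
  shows "psi dd k z - psi dd k w = (-1) ^ k * (z - w) / ((Qn dd k + z * Qp dd k) * (Qn dd k + w * Qp dd k))"
proof -
  define a where "a = Qn dd k + z * Qp dd k"
  define b where "b = Qn dd k + w * Qp dd k"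
  have a: "0 < a" and b: "0 < b" using den_pos[OF assms(1), of k] den_pos[OF assms(2), of k] Q_pos[of k]
    by (simp_all add: a_def b_def)
  have "psi dd k z - psi dd k w = ((Pn dd k + z * Pp dd k) * b - (Pn dd k + w * Pp dd k) * a) / (a * b)"
    unfolding psi_formula[OF assms(1)] psi_formula[OF assms(2)] a_def[symmetric] b_def[symmetric]
    using a b by (simp add: field_simps)
  also have "(Pn dd k + z * Pp dd k) * b - (Pn dd k + w * Pp dd k) * a = (z - w) * (Pp dd k * Qn dd k - Pn dd k * Qp dd k)"
    unfolding a_def b_def by (simp add: algebra_simps)
  finally show ?thesis unfolding det a_def b_def by (simp add: mult.commute)
qed

lemma psi_absdiff: assumes "0 \<le> z" "0 \<le> w"
  shows "\<bar>psi dd k z - psi dd k w\<bar> = \<bar>z - w\<bar> / ((Qn dd k + z * Qp dd k) * (Qn dd k + w * Qp dd k))"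
proof -
  have "0 < Qn dd k + z * Qp dd k" "0 < Qn dd k + w * Qp dd k"
    using den_pos[OF assms(1), of k] den_pos[OF assms(2), of k] Q_pos[of k] by auto
  then show ?thesis unfolding psi_diff[OF assms] by (simp add: abs_mult abs_divide)
qed

lemma psi_close: assumes "0 \<le> z" "z \<le> 1" "0 \<le> w" "w \<le> 1"
  shows "\<bar>psi dd k z - psi dd k w\<bar> \<le> 1 / (Qn dd k)^2"
proof -
  have q: "1 \<le> Qn dd k" using Q_pos by auto
  have "Qn dd k * Qn dd k \<le> (Qn dd k + z * Qp dd k) * (Qn dd k + w * Qp dd k)"
    using den_pos[of z k] den_pos[of w k] assms q by (intro mult_mono) auto
  moreover have "\<bar>z - w\<bar> \<le> 1" using assms by auto
  ultimately show ?thesis unfolding psi_absdiff[OF assms(1,3)] using q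
    by (intro frac_le) (auto simp: power2_eq_square)
qed

lemma psi_range: "z \<in> {0..1} \<Longrightarrow> psi dd k z \<in> {0..1}"
proof (induction k arbitrary: z)
  case 0 then show ?case by simp
next
  case (Suc k)
  have "1 / (dd k + z) \<in> {0..1}" using dd1[of k] Suc.prems by (auto simp: field_simps)
  then show ?case using Suc.IH by simp
qed

lemma psi_cont: "continuous_on {0..1} (psi dd k)"
proof -
  have "continuous_on {0..1} (\<lambda>z. (Pn dd k + z * Pp dd k) / (Qn dd k + z * Qp dd k))"
  proof (intro continuous_intros ballI)
    fix z :: real assume "z \<in> {0..1}"
    then have "0 \<le> z * Qp dd k" using Q_pos[of k] by simp
    then show "Qn dd k + z * Qp dd k \<noteq> 0" using Q_pos[of k] by linarith
  qed
  then show ?thesis by (rule continuous_on_eq) (simp add: psi_formula)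
qed

end



lemma dtu_half: assumes v: "0 < v" "v < 1" shows "dtu v (1/2) = v"
proof -
  have "dtu v (real_of_int (0 + 1) / real_of_int (1 + 1)) =
     (1 - v) * dtu v (real_of_int 0 / real_of_int 1) + v * dtu v (real_of_int 1 / real_of_int 1)"
    by (rule dtu_med[OF v]) auto
  then show ?thesis using dtu_0[OF v] dtu_1[OF v] by simp
qed

lemma dtu_third: assumes v: "0 < v" "v < 1" shows "dtu v (1/3) = v ^ 2"
proof -
  have "dtu v (real_of_int (0 + 1) / real_of_int (1 + 2)) =
     (1 - v) * dtu v (real_of_int 0 / real_of_int 1) + v * dtu v (real_of_int 1 / real_of_int 2)"
    by (rule dtu_med[OF v]) auto
  then show ?thesis using dtu_0[OF v] dtu_half[OF v] by (simp add: power2_eq_square)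
qed

lemma dtu_34: assumes v: "0 < v" "v < 1" shows "1 - dtu v (3/4) = (1 - v) ^ 3"
proof -
  have a: "dtu v (real_of_int (1 + 1) / real_of_int (2 + 1)) =
     (1 - v) * dtu v (real_of_int 1 / real_of_int 2) + v * dtu v (real_of_int 1 / real_of_int 1)"
    by (rule dtu_med[OF v]) auto
  have b: "dtu v (real_of_int (2 + 1) / real_of_int (3 + 1)) =
     (1 - v) * dtu v (real_of_int 2 / real_of_int 3) + v * dtu v (real_of_int 1 / real_of_int 1)"
    by (rule dtu_med[OF v]) auto
  have "dtu v (2/3) = (1 - v) * v + v" using a dtu_half[OF v] dtu_1[OF v] by simp
  then have "dtu v (3/4) = (1 - v) * ((1 - v) * v + v) + v" using b dtu_1[OF v] by simp
  then show ?thesis by (simp add: power3_eq_cube algebra_simps)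
qed

lemma gap_lemma:
  assumes v: "0 < v" "v < 1" and a: "1 \<le> a" "a \<le> 2" and t: "1/3 \<le> t" "t \<le> 3/4"
    and z: "z \<in> {0..1}" and zo: "z \<le> 1 / (real a + 1) \<or> 1 / real a \<le> z"
  shows "v * (1 - v) * min (v ^ 3) ((1 - v) ^ 2) \<le> \<bar>dtu v z - dtu v (1 / (real a + t))\<bar>"
proof -
  have v': "0 < 1 - v" "1 - v < 1" using v by auto
  have tin: "t \<in> {0..1}" using t by auto
  define c where "c = v ^ (a - 1) * (1 - v)"
  have cpos: "0 \<le> c" using v by (simp add: c_def)
  have cge: "v * (1 - v) \<le> c"
  proof -
    have "v \<le> v ^ (a - 1)" using a v by (cases "a = 1") (auto simp: numeral_2_eq_2 le_Suc_eq)
    then show ?thesis unfolding c_def using v by (intro mult_right_mono) auto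
  qed
  have GBt: "dtu v (1 / (real a + t)) = v ^ (a - 1) - c * dtu (1 - v) t"
    using GB[OF v a(1) tin] by (simp add: c_def)
  have m0: "0 \<le> min (v ^ 3) ((1 - v) ^ 2)" using v by simp
  have mbound: "v * (1 - v) * min (v ^ 3) ((1 - v) ^ 2) \<le> c * min (v ^ 3) ((1 - v) ^ 2)"
    using cge m0 by (rule mult_right_mono)
  from zo show ?thesis
  proof
    assume zl: "z \<le> 1 / (real a + 1)"
    have i1: "1 / (real a + 1) \<in> {0..1}" by auto
    have "dtu v z \<le> dtu v (1 / (real a + 1))" using dtu_mono[OF v z i1 zl] .
    also have "dtu v (1 / (real a + 1)) = v ^ (a - 1) - c * dtu (1 - v) 1"
      using GB[OF v a(1), of 1] by (simp add: c_def)
    finally have A: "dtu v z \<le> v ^ (a - 1) - c" using dtu_1[OF v'] by simp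
    have "dtu (1 - v) t \<le> dtu (1 - v) (3/4)" using dtu_mono[OF v' tin _ t(2)] by simp
    also have "\<dots> = 1 - v ^ 3" using dtu_34[OF v'] by simp
    finally have "c * (v ^ 3) \<le> c * (1 - dtu (1 - v) t)" using cpos by (intro mult_left_mono) auto
    moreover have "c * min (v ^ 3) ((1 - v) ^ 2) \<le> c * v ^ 3" using cpos by (intro mult_left_mono) auto
    moreover have "c * (1 - dtu (1 - v) t) = c - c * dtu (1 - v) t" by (simp add: algebra_simps)
    ultimately have "c * min (v ^ 3) ((1 - v) ^ 2) \<le> dtu v (1 / (real a + t)) - dtu v z"
      using A GBt by linarith
    then show ?thesis using mbound by linarith
  next
    assume zr: "1 / real a \<le> z"
    have i1: "1 / real a \<in> {0..1}" using a by auto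
    have "dtu v (1 / real a) \<le> dtu v z" using dtu_mono[OF v i1 z zr] .
    moreover have "dtu v (1 / real a) = v ^ (a - 1)" using dtu_inv[OF v a(1)] by simp
    ultimately have A: "v ^ (a - 1) \<le> dtu v z" by simp
    have "dtu (1 - v) (1/3) \<le> dtu (1 - v) t" using dtu_mono[OF v' _ tin t(1)] by simp
    then have "(1 - v) ^ 2 \<le> dtu (1 - v) t" using dtu_third[OF v'] by simp
    then have "c * ((1 - v) ^ 2) \<le> c * dtu (1 - v) t" using cpos by (intro mult_left_mono) auto
    moreover have "c * min (v ^ 3) ((1 - v) ^ 2) \<le> c * (1 - v) ^ 2" using cpos by (intro mult_left_mono) auto
    ultimately have "c * min (v ^ 3) ((1 - v) ^ 2) \<le> dtu v z - dtu v (1 / (real a + t))"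
      using A GBt by linarith
    then show ?thesis using mbound by linarith
  qed
qed

definition cmin :: real where "cmin = LL * (1 - LL) ^ 4"

lemma cmin_pos: "0 < cmin" using LL01 by (simp add: cmin_def)

lemma cmin_le: assumes "v = LL \<or> v = 1 - LL" shows "cmin \<le> v * (1 - v) * min (v ^ 3) ((1 - v) ^ 2)"
proof -
  have L: "1 - LL < LL" "0 < 1 - LL" "1 - LL < 1" using LL_bounds by auto
  have c3: "(1 - LL) ^ 3 \<le> (1 - LL) ^ 2" using L by (intro power_decreasing) auto
  have c4: "(1 - LL) ^ 3 \<le> LL ^ 3" using L by (intro power_mono) auto
  have "(1 - LL) ^ 3 \<le> (1 - LL) ^ 1" using L by (intro power_decreasing) auto
  then have c5: "(1 - LL) ^ 3 \<le> LL ^ 2" by (metis LL_sq power_one_right)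
  have e: "cmin = LL * (1 - LL) * (1 - LL) ^ 3" unfolding cmin_def by (simp add: power_Suc[symmetric] eval_nat_numeral)
  have p: "0 \<le> LL * (1 - LL)" using L LL01 by simp
  from assms show ?thesis
  proof
    assume "v = LL"
    have "(1 - LL) ^ 3 \<le> min (LL ^ 3) ((1 - LL) ^ 2)" using c3 c4 by simp
    then have "LL * (1 - LL) * (1 - LL) ^ 3 \<le> LL * (1 - LL) * min (LL ^ 3) ((1 - LL) ^ 2)"
      using p by (rule mult_left_mono)
    then show ?thesis unfolding e using \<open>v = LL\<close> by simp
  next
    assume "v = 1 - LL"
    have "(1 - LL) ^ 3 \<le> min ((1 - LL) ^ 3) (LL ^ 2)" using c5 by simp
    then have "LL * (1 - LL) * (1 - LL) ^ 3 \<le> LL * (1 - LL) * min ((1 - LL) ^ 3) (LL ^ 2)"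
      using p by (rule mult_left_mono)
    then show ?thesis unfolding e using \<open>v = 1 - LL\<close> by (simp add: mult.commute)
  qed
qed




definition nu :: "nat \<Rightarrow> real" where "nu k = (if even k then LL else 1 - LL)"

lemma nu_props: "0 < nu k" "nu k < 1" "1 - nu k = nu (Suc k)" "nu k = LL \<or> nu k = 1 - LL"
  using LL01 by (auto simp: nu_def)

definition ddx :: "real \<Rightarrow> nat \<Rightarrow> real" where "ddx x k = real (dg x k)"

primrec Bk :: "real \<Rightarrow> nat \<Rightarrow> real" where
  "Bk x 0 = 1"
| "Bk x (Suc k) = Bk x k * nu k ^ (dg x k - 1) * (1 - nu k)"

lemma Bk_pos: "0 < Bk x k"
  by (induction k) (use nu_props in auto)

definition EE :: "real \<Rightarrow> nat \<Rightarrow> real" where "EE x k = Bk x k * (Qn (ddx x) k)^2"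

context
  fixes x :: real
  assumes X: "0 < x" "x < 1" "x \<notin> \<rat>" and cf: "\<forall>n. cf_pq x n \<le> 2"
begin

lemma dg12: "1 \<le> dg x k \<and> dg x k \<le> 2" using dg_props(1)[OF X] cf by (auto simp: dg_def)

lemma W_lb: "LL * (1 - LL) \<le> nu k ^ (dg x k - 1) * (1 - nu k)"
proof -
  have e: "LL * (1 - LL) = nu k * (1 - nu k)"
  proof (cases "even k")
    case True then show ?thesis by (simp add: nu_def)
  next
    case False then show ?thesis by (simp add: nu_def algebra_simps)
  qed
  have "nu k \<le> nu k ^ (dg x k - 1)"
  proof (cases "dg x k = 1")
    case True then show ?thesis using nu_props[of k] by simp
  next
    case False
    then have "dg x k - 1 = 1" using dg12[of k] by arith
    then show ?thesis by simp
  qed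
  then show ?thesis unfolding e using nu_props[of k] by (intro mult_right_mono) auto
qed


lemma dd1: "1 \<le> ddx x k" using dg_props(1)[OF X] by (simp add: ddx_def)

lemma QposX: "1 \<le> Qn (ddx x) k \<and> 0 \<le> Qp (ddx x) k \<and> Qp (ddx x) k \<le> Qn (ddx x) k"
  by (rule Q_pos) (rule dd1)

lemma QmonoX: "Qn (ddx x) k \<le> Qn (ddx x) (Suc k)"
  by (rule Qn_mono) (rule dd1)

lemma x_psi: "psi (ddx x) k (xs x k) = x"
proof (induction k)
  case 0 then show ?case by (simp add: xs_def)
next
  case (Suc k)
  have "psi (ddx x) (Suc k) (xs x (Suc k)) = psi (ddx x) k (1 / (real (dg x k) + xs x (Suc k)))"
    by (simp add: ddx_def)
  also have "\<dots> = psi (ddx x) k (xs x k)" using dg_props(2)[OF X, of k] by simp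
  finally show ?case using Suc by simp
qed

lemma g_rel: "\<exists>A S. \<bar>S\<bar> = Bk x k \<and> (\<forall>z\<in>{0..1}. dtu LL (psi (ddx x) k z) = A + S * dtu (nu k) z)"
proof (induction k)
  case 0 then show ?case by (rule exI[of _ 0], rule exI[of _ 1]) (simp add: nu_def)
next
  case (Suc k)
  then obtain A S where AS: "\<bar>S\<bar> = Bk x k" "\<And>z. z\<in>{0..1} \<Longrightarrow> dtu LL (psi (ddx x) k z) = A + S * dtu (nu k) z"
    by blast
  let ?a = "dg x k"
  have a1: "1 \<le> ?a" using dg_props(1)[OF X] by simp
  let ?c = "nu k ^ (?a - 1)"
  show ?case
  proof (intro exI conjI ballI)
    show "\<bar>- S * ?c * (1 - nu k)\<bar> = Bk x (Suc k)" using AS(1) nu_props[of k] by (simp add: abs_mult)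
    fix z :: real assume z: "z \<in> {0..1}"
    have zz: "1 / (real ?a + z) \<in> {0..1}" using a1 z by (auto simp: field_simps)
    have "dtu LL (psi (ddx x) (Suc k) z) = A + S * dtu (nu k) (1 / (real ?a + z))"
      using AS(2)[OF zz] by (simp add: ddx_def)
    also have "dtu (nu k) (1 / (real ?a + z)) = ?c - ?c * (1 - nu k) * dtu (1 - nu k) z"
      by (rule GB[OF nu_props(1,2) a1 z])
    finally have F: "dtu LL (psi (ddx x) (Suc k) z) = A + S * (?c - ?c * (1 - nu k) * dtu (1 - nu k) z)" .
    have F2: "dtu LL (psi (ddx x) (Suc k) z) = A + S * (?c - ?c * (1 - nu k) * dtu (nu (Suc k)) z)"
      by (subst nu_props(3)[symmetric]) (rule F)
    show "dtu LL (psi (ddx x) (Suc k) z) = (A + S * ?c) + (- S * ?c * (1 - nu k)) * dtu (nu (Suc k)) z"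
      unfolding F2 by (simp add: algebra_simps)
  qed
qed

lemma EE_pos: "0 < EE x k"
  using Bk_pos Q_pos[of "ddx x" k] dd1 unfolding EE_def by (simp add: dd1)

lemma EE_step: "LL * (1 - LL) * EE x k \<le> EE x (Suc k)"
proof -
  have q: "(Qn (ddx x) k)^2 \<le> (Qn (ddx x) (Suc k))^2"
    using QmonoX[of k] QposX[of k] by (intro power_mono) auto
  have "LL * (1 - LL) * EE x k = Bk x k * (LL * (1 - LL)) * (Qn (ddx x) k)^2" unfolding EE_def by simp
  also have "\<dots> \<le> Bk x k * (nu k ^ (dg x k - 1) * (1 - nu k)) * (Qn (ddx x) (Suc k))^2"
  proof (rule mult_mono)
    show "Bk x k * (LL * (1 - LL)) \<le> Bk x k * (nu k ^ (dg x k - 1) * (1 - nu k))"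
      using W_lb[of k] Bk_pos[of x k] by (intro mult_left_mono) auto
    show "0 \<le> Bk x k * (nu k ^ (dg x k - 1) * (1 - nu k))" using Bk_pos[of x k] nu_props[of k] by simp
  qed (use q in auto)
  also have "\<dots> = EE x (Suc k)" unfolding EE_def by (simp add: mult.assoc)
  finally show ?thesis .
qed

lemma Qp_lb: "Qn (ddx x) (Suc j) \<le> 3 * Qp (ddx x) (Suc j)"
proof -
  have "ddx x j \<le> 2" using dg12[of j] by (simp add: ddx_def)
  then have h: "ddx x j * Qn (ddx x) j \<le> 2 * Qn (ddx x) j" using QposX[of j] by (intro mult_right_mono) auto
  show ?thesis unfolding Qn_Suc Qp_Suc using h QposX[of j] by linarith
qed

lemma num_bound:
  assumes a: "a = 1 \<or> a = 2" and b: "b = 1 \<or> b = 2"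
  shows "6/5 \<le> LL ^ a * (1 - LL) ^ b * (real b * (real a + 1/3) + 1)^2"
proof -
  have e: "LL ^ a * (1 - LL) ^ b = LL ^ (a + 2 * b)" unfolding LL_sq by (simp add: power_mult power_add)
  have L: "0.618 \<le> LL" using LL_bounds by simp
  have m: "0.618 ^ n \<le> LL ^ n" for n using L by (intro power_mono) auto
  have num: "6/5 \<le> (0.618::real) ^ (a + 2 * b) * (real b * (real a + 1/3) + 1)^2"
    using a b by (elim disjE) (simp_all add: eval_nat_numeral)
  have "(0.618::real) ^ (a + 2 * b) * (real b * (real a + 1/3) + 1)^2 \<le> LL ^ (a + 2 * b) * (real b * (real a + 1/3) + 1)^2"
    by (intro mult_right_mono m) simp
  then have "6/5 \<le> LL ^ (a + 2 * b) * (real b * (real a + 1/3) + 1)^2" using num by linarith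
  then show ?thesis unfolding e .
qed

end



definition Cyl :: "real \<Rightarrow> nat \<Rightarrow> real \<Rightarrow> bool" where "Cyl x k y \<longleftrightarrow> (\<exists>z\<in>{0..1}. psi (ddx x) k z = y)"

context
  fixes x :: real
  assumes X: "0 < x" "x < 1" "x \<notin> \<rat>" and cf: "\<forall>n. cf_pq x n \<le> 2"
begin

lemma EE_two: assumes k: "even k" "1 \<le> k" shows "6/5 * EE x k \<le> EE x (Suc (Suc k))"
proof -
  let ?a = "dg x k" and ?b = "dg x (Suc k)"
  have a: "?a = 1 \<or> ?a = 2" using dg12[OF X cf, of k] by auto
  have b: "?b = 1 \<or> ?b = 2" using dg12[OF X cf, of "Suc k"] by auto
  have nk: "nu k = LL" "nu (Suc k) = 1 - LL" using k by (auto simp: nu_def)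
  have B: "Bk x (Suc (Suc k)) = Bk x k * (LL ^ ?a * (1 - LL) ^ ?b)"
  proof -
    have "Bk x (Suc (Suc k)) = Bk x k * (LL ^ (?a - 1) * LL) * ((1 - LL) ^ (?b - 1) * (1 - LL))"
      by (simp only: Bk.simps nk) (simp add: algebra_simps)
    also have "LL ^ (?a - 1) * LL = LL ^ ?a" using a by (auto simp: power2_eq_square)
    also have "(1 - LL) ^ (?b - 1) * (1 - LL) = (1 - LL) ^ ?b" using b by (auto simp: power2_eq_square)
    finally show ?thesis by (simp add: algebra_simps)
  qed
  define Q where "Q = Qn (ddx x) k"
  define Q' where "Q' = Qp (ddx x) k"
  have QQ: "1 \<le> Q" "0 \<le> Q'" using QposX[OF X cf, of k] by (auto simp: Q_def Q'_def)
  obtain j where kj: "k = Suc j" using k by (cases k) auto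
  have Q'lb: "Q \<le> 3 * Q'" unfolding Q_def Q'_def kj by (rule Qp_lb[OF X cf])
  have Q2: "Qn (ddx x) (Suc (Suc k)) = real ?b * (real ?a * Q + Q') + Q"
    by (simp add: Qn_Suc Qp_Suc ddx_def Q_def Q'_def)
  define K where "K = real ?b * (real ?a + 1/3) + 1"
  have K0: "0 \<le> K" unfolding K_def by simp
  have KQ: "K * Q \<le> Qn (ddx x) (Suc (Suc k))"
  proof -
    have "Q / 3 \<le> Q'" using Q'lb by simp
    then have "real ?b * (Q / 3) \<le> real ?b * Q'" by (intro mult_left_mono) auto
    then show ?thesis unfolding Q2 K_def by (simp add: algebra_simps)
  qed
  have KQ2: "(K * Q)^2 \<le> (Qn (ddx x) (Suc (Suc k)))^2" using KQ K0 QQ by (intro power_mono) auto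
  have nb: "6/5 \<le> LL ^ ?a * (1 - LL) ^ ?b * K^2" unfolding K_def using num_bound[OF X cf a b] .
  have pos: "0 \<le> Bk x k * Q^2" using Bk_pos[of x k] by simp
  have "6/5 * EE x k = 6/5 * (Bk x k * Q^2)" by (simp add: EE_def Q_def)
  also have "\<dots> \<le> LL ^ ?a * (1 - LL) ^ ?b * K^2 * (Bk x k * Q^2)" using nb pos by (rule mult_right_mono)
  also have "\<dots> = Bk x k * (LL ^ ?a * (1 - LL) ^ ?b) * (K * Q)^2" by (simp add: algebra_simps power_mult_distrib)
  also have "\<dots> \<le> Bk x k * (LL ^ ?a * (1 - LL) ^ ?b) * (Qn (ddx x) (Suc (Suc k)))^2"
    using KQ2 Bk_pos[of x k] LL01 by (intro mult_left_mono) auto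
  also have "\<dots> = EE x (Suc (Suc k))" unfolding EE_def B by simp
  finally show ?thesis .
qed

lemma EE_geo: "(6/5) ^ j * EE x 2 \<le> EE x (2 + 2 * j)"
proof (induction j)
  case 0 then show ?case by simp
next
  case (Suc j)
  have "6/5 * EE x (2 + 2 * j) \<le> EE x (Suc (Suc (2 + 2 * j)))" by (rule EE_two) auto
  then show ?case using Suc by simp
qed

lemma EE_lim: "filterlim (EE x) at_top sequentially"
  unfolding filterlim_at_top
proof
  fix Z :: real
  define c where "c = LL * (1 - LL) * EE x 2"
  have L: "0 < LL * (1 - LL)" "LL * (1 - LL) \<le> 1" using LL01 by (auto simp: mult_le_one)
  have c0: "0 < c" unfolding c_def using L EE_pos[OF X cf] by simp
  obtain j0 where j0: "Z / c < (6/5) ^ j0" using real_arch_pow[of "6/5" "Z / c"] by auto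
  show "\<forall>\<^sub>F k in sequentially. Z \<le> EE x k"
    unfolding eventually_sequentially
  proof (intro exI allI impI)
    fix k assume k: "2 + 2 * j0 \<le> k"
    define j where "j = (k - 2) div 2"
    have jj: "j0 \<le> j" using k unfolding j_def by auto
    have "Z \<le> c * (6/5) ^ j0" using j0 c0 by (simp add: field_simps)
    also have "\<dots> \<le> c * (6/5) ^ j" using jj c0 by (intro mult_left_mono power_increasing) auto
    also have "\<dots> \<le> EE x k"
    proof (cases "k = 2 + 2 * j")
      case True
      have "c * (6/5) ^ j \<le> (6/5) ^ j * EE x 2" unfolding c_def using L EE_pos[OF X cf, of 2]
        by (simp add: mult_le_cancel_right1 mult.commute)
      also have "\<dots> \<le> EE x k" using EE_geo[of j] True by simp
      finally show ?thesis .
    next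
      case False
      then have kk: "k = Suc (2 + 2 * j)" using k unfolding j_def by arith
      have "c * (6/5) ^ j = LL * (1 - LL) * ((6/5) ^ j * EE x 2)" unfolding c_def by simp
      also have "\<dots> \<le> LL * (1 - LL) * EE x (2 + 2 * j)" using EE_geo[of j] L by (intro mult_left_mono) auto
      also have "\<dots> \<le> EE x k" unfolding kk by (rule EE_step[OF X cf])
      finally show ?thesis .
    qed
    finally show "Z \<le> EE x k" .
  qed
qed


lemma Cyl_close: "Cyl x k y \<Longrightarrow> \<bar>y - x\<bar> \<le> 1 / (Qn (ddx x) k)^2"
proof -
  assume "Cyl x k y"
  then obtain z where z: "z \<in> {0..1}" "psi (ddx x) k z = y" unfolding Cyl_def by auto
  have t: "0 \<le> xs x k" "xs x k \<le> 1" using xs_basic[OF X, of k] by auto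
  have "\<bar>psi (ddx x) k z - psi (ddx x) k (xs x k)\<bar> \<le> 1 / (Qn (ddx x) k)^2"
    by (rule psi_close[OF dd1[OF X cf]]) (use z t in auto)
  then show ?thesis using z x_psi[OF X cf, of k] by simp
qed

lemma Cyl_range: "Cyl x k y \<Longrightarrow> y \<in> {0..1}"
  unfolding Cyl_def using psi_range[OF dd1[OF X cf]] by auto

lemma Bk_le1: "Bk x k \<le> 1"
proof (induction k)
  case 0 then show ?case by simp
next
  case (Suc k)
  have "nu k ^ (dg x k - 1) * (1 - nu k) \<le> 1" using nu_props[of k] by (intro mult_le_one power_le_one) auto
  then have "Bk x k * (nu k ^ (dg x k - 1) * (1 - nu k)) \<le> 1 * 1"
    using Suc Bk_pos[of x k] nu_props[of k] by (intro mult_mono) auto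
  then show ?case by (simp add: mult.assoc)
qed

lemma Cyl_exit: assumes y: "Cyl x K y" "y \<noteq> x" shows "\<exists>k\<ge>K. Cyl x k y \<and> \<not> Cyl x (Suc k) y"
proof -
  have d: "0 < \<bar>y - x\<bar>" using y by simp
  obtain N where N: "\<forall>n\<ge>N. 2 / \<bar>y - x\<bar> \<le> EE x n" using EE_lim unfolding filterlim_at_top eventually_sequentially by blast
  have nc: "\<not> Cyl x (max N K + 1) y"
  proof
    assume c: "Cyl x (max N K + 1) y"
    let ?n = "max N K + 1"
    have "2 / \<bar>y - x\<bar> \<le> EE x ?n" using N by simp
    also have "EE x ?n \<le> (Qn (ddx x) ?n)^2" unfolding EE_def using Bk_le1[of ?n] Bk_pos[of x ?n] by (intro mult_left_le_one_le) auto
    finally have "2 / \<bar>y - x\<bar> \<le> (Qn (ddx x) ?n)^2" .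
    moreover have "\<bar>y - x\<bar> \<le> 1 / (Qn (ddx x) ?n)^2" using Cyl_close[OF c] .
    moreover have "1 \<le> Qn (ddx x) ?n" using QposX[OF X cf] by auto
    ultimately show False using d by (simp add: field_simps)
  qed
  have gen: "\<And>m. Cyl x K y \<Longrightarrow> \<not> Cyl x (K + m) y \<Longrightarrow> \<exists>k\<ge>K. Cyl x k y \<and> \<not> Cyl x (Suc k) y"
  proof -
    fix m show "Cyl x K y \<Longrightarrow> \<not> Cyl x (K + m) y \<Longrightarrow> \<exists>k\<ge>K. Cyl x k y \<and> \<not> Cyl x (Suc k) y"
    proof (induction m)
      case 0 then show ?case by simp
    next
      case (Suc m)
      show ?case
      proof (cases "Cyl x (K + m) y")
        case True then show ?thesis using Suc.prems by (intro exI[of _ "K + m"]) auto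
      next
        case False then show ?thesis using Suc by blast
      qed
    qed
  qed
  have "K + (max N K + 1 - K) = max N K + 1" by simp
  then show ?thesis using gen[of "max N K + 1 - K"] y(1) nc by metis
qed

end



context
  fixes x :: real
  assumes X: "0 < x" "x < 1" "x \<notin> \<rat>" and cf: "\<forall>n. cf_pq x n \<le> 2"
begin

lemma nbhd: "\<exists>d>0. \<forall>y. \<bar>y - x\<bar> < d \<longrightarrow> Cyl x K y"
proof -
  let ?D = "ddx x"
  have d1: "\<And>k. 1 \<le> ?D k" using dd1[OF X cf] .
  define t where "t = xs x K"
  have t: "0 < t" "t < 1" using xs_basic[OF X, of K] by (auto simp: t_def)
  have xt: "psi ?D K t = x" using x_psi[OF X cf, of K] by (simp add: t_def)
  define p0 where "p0 = psi ?D K 0"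
  define p1 where "p1 = psi ?D K 1"
  define D0 where "D0 = (Qn ?D K + 0 * Qp ?D K) * (Qn ?D K + t * Qp ?D K)"
  define D1 where "D1 = (Qn ?D K + 1 * Qp ?D K) * (Qn ?D K + t * Qp ?D K)"
  have Qp: "1 \<le> Qn ?D K" "0 \<le> Qp ?D K" using QposX[OF X cf, of K] by auto
  have tQ: "0 \<le> t * Qp ?D K" using t Qp by simp
  have D0p: "0 < D0" unfolding D0_def using Qp tQ by (intro mult_pos_pos) auto
  have D1p: "0 < D1" unfolding D1_def using Qp tQ by (intro mult_pos_pos) auto
  have e0': "psi ?D K 0 - psi ?D K t = (-1) ^ K * (0 - t) / D0" unfolding D0_def
    by (rule psi_diff[OF d1]) (use t in auto)
  have e0: "p0 - x = (-1) ^ K * (0 - t) / D0" unfolding p0_def using e0' by (simp only: xt)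
  have e1': "psi ?D K 1 - psi ?D K t = (-1) ^ K * (1 - t) / D1" unfolding D1_def
    by (rule psi_diff[OF d1]) (use t in auto)
  have e1: "p1 - x = (-1) ^ K * (1 - t) / D1" unfolding p1_def using e1' by (simp only: xt)
  define sg where "sg = (-1::real) ^ K"
  have sq: "sg * sg = 1" unfolding sg_def by (simp flip: power_mult_distrib)
  have n: "(sg * (0 - t)) * (sg * (1 - t)) = - (t * (1 - t))"
  proof -
    have "(sg * (0 - t)) * (sg * (1 - t)) = (sg * sg) * (- (t * (1 - t)))" by (simp add: algebra_simps)
    then show ?thesis using sq by simp
  qed
  have "(p0 - x) * (p1 - x) = (sg * (0 - t)) * (sg * (1 - t)) / (D0 * D1)"
    unfolding e0 e1 sg_def by simp
  also have "\<dots> = - (t * (1 - t)) / (D0 * D1)" unfolding n ..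
  also have "\<dots> < 0" using t D0p D1p by (simp add: divide_neg_pos)
  finally have prod: "(p0 - x) * (p1 - x) < 0" .
  define d where "d = min \<bar>p0 - x\<bar> \<bar>p1 - x\<bar>"
  have dpos: "0 < d" using prod unfolding d_def by auto
  have cont: "continuous_on {0..1} (psi ?D K)" using psi_cont[OF d1] .
  show ?thesis
  proof (intro exI conjI allI impI)
    show "0 < d" by (rule dpos)
    fix y assume y: "\<bar>y - x\<bar> < d"
    show "Cyl x K y"
    proof (cases "p0 < x")
      case True
      then have "x < p1" using prod by (auto simp: mult_less_0_iff)
      then have "p0 \<le> y" "y \<le> p1" using True y unfolding d_def by auto
      then obtain z where "0 \<le> z" "z \<le> 1" "psi ?D K z = y"
        using IVT'[of "psi ?D K" 0 y 1] cont unfolding p0_def p1_def by auto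
      then show ?thesis unfolding Cyl_def by auto
    next
      case False
      then have "p0 > x" using prod by (cases "p0 = x") auto
      then have "p1 < x" using prod by (auto simp: mult_less_0_iff)
      then have "p1 \<le> y" "y \<le> p0" using \<open>p0 > x\<close> y unfolding d_def by auto
      then obtain z where "0 \<le> z" "z \<le> 1" "psi ?D K z = y"
        using IVT2'[of "psi ?D K" 1 y 0] cont unfolding p0_def p1_def by auto
      then show ?thesis unfolding Cyl_def by auto
    qed
  qed
qed

lemma part_i: "filterlim (\<lambda>y. (dtu LL y - dtu LL x) / (y - x)) at_top (at x)"
  unfolding filterlim_at_top
proof
  fix Z :: real
  let ?D = "ddx x"
  have d1: "\<And>k. 1 \<le> ?D k" using dd1[OF X cf] .
  obtain K where K: "\<forall>k\<ge>K. Z / cmin \<le> EE x k"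
    using EE_lim[OF X cf] unfolding filterlim_at_top eventually_sequentially by blast
  obtain d where d: "0 < d" "\<And>y. \<bar>y - x\<bar> < d \<Longrightarrow> Cyl x K y" using nbhd by blast
  show "\<forall>\<^sub>F y in at x. Z \<le> (dtu LL y - dtu LL x) / (y - x)"
    unfolding eventually_at
  proof (intro exI conjI ballI impI)
    show "0 < d" by (rule d(1))
    fix y :: real assume yy: "y \<noteq> x \<and> dist y x < d"
    then have cK: "Cyl x K y" using d(2) by (simp add: dist_real_def)
    obtain k where k: "K \<le> k" "Cyl x k y" "\<not> Cyl x (Suc k) y" using Cyl_exit[OF X cf cK] yy by blast
    obtain z where z: "z \<in> {0..1}" "psi ?D k z = y" using k(2) by (auto simp: Cyl_def)
    let ?a = "dg x k"
    have a: "1 \<le> ?a" "?a \<le> 2" using dg12[OF X cf, of k] by auto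
    have zo: "z \<le> 1 / (real ?a + 1) \<or> 1 / real ?a \<le> z"
    proof (rule ccontr)
      assume "\<not> (z \<le> 1 / (real ?a + 1) \<or> 1 / real ?a \<le> z)"
      then have zi: "1 / (real ?a + 1) < z" "z < 1 / real ?a" by auto
      have zp: "0 < z" proof -
        have "0 < 1 / (real ?a + 1)" by simp
        then show ?thesis using zi(1) by linarith
      qed
      define z' where "z' = 1 / z - real ?a"
      have z'1: "z' \<in> {0..1}"
      proof -
        have "real ?a < 1 / z" using zi(2) zp a by (simp add: field_simps)
        moreover have "1 / z < real ?a + 1" using zi(1) zp a by (simp add: field_simps)
        ultimately show ?thesis unfolding z'_def by auto
      qed
      have "psi ?D (Suc k) z' = psi ?D k (1 / (real ?a + z'))" by (simp add: ddx_def)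
      also have "1 / (real ?a + z') = z" unfolding z'_def using zp by simp
      finally have "Cyl x (Suc k) y" unfolding Cyl_def using z'1 z(2) by auto
      then show False using k(3) by simp
    qed
    have tr: "1/3 < xs x (Suc k) \<and> xs x (Suc k) < 3/4" using xs_range[OF X cf] .
    have xk: "xs x k = 1 / (real ?a + xs x (Suc k))" using dg_props(2)[OF X] .
    have gap: "cmin \<le> \<bar>dtu (nu k) z - dtu (nu k) (xs x k)\<bar>"
    proof -
      have "cmin \<le> nu k * (1 - nu k) * min (nu k ^ 3) ((1 - nu k) ^ 2)" using cmin_le nu_props(4) by blast
      also have "\<dots> \<le> \<bar>dtu (nu k) z - dtu (nu k) (1 / (real ?a + xs x (Suc k)))\<bar>"
        by (rule gap_lemma[OF nu_props(1,2) a _ _ z(1) zo]) (use tr in auto)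
      finally show ?thesis unfolding xk .
    qed
    obtain A S where AS: "\<bar>S\<bar> = Bk x k" "\<And>w. w\<in>{0..1} \<Longrightarrow> dtu LL (psi ?D k w) = A + S * dtu (nu k) w"
      using g_rel[OF X cf, of k] by blast
    have xkin: "xs x k \<in> {0..1}" using xs_basic[OF X, of k] by auto
    have gdiff: "dtu LL y - dtu LL x = S * (dtu (nu k) z - dtu (nu k) (xs x k))"
      using AS(2)[OF z(1)] AS(2)[OF xkin] z(2) x_psi[OF X cf, of k] by (simp add: algebra_simps)
    have G: "Bk x k * cmin \<le> \<bar>dtu LL y - dtu LL x\<bar>"
      unfolding gdiff abs_mult AS(1) using gap Bk_pos[of x k] by (intro mult_left_mono) auto
    have yx0: "0 < \<bar>y - x\<bar>" using yy by simp
    have cl: "\<bar>y - x\<bar> \<le> 1 / (Qn ?D k)^2" using Cyl_close[OF X cf k(2)] .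
    have Q1: "1 \<le> Qn ?D k" using QposX[OF X cf, of k] by auto
    have cl2: "\<bar>y - x\<bar> * (Qn ?D k)^2 \<le> 1" using cl Q1 by (simp add: field_simps)
    have yin: "y \<in> {0..1}" using Cyl_range[OF X cf k(2)] .
    have xin: "x \<in> {0..1}" using X by auto
    have nonneg: "(dtu LL y - dtu LL x) / (y - x) = \<bar>dtu LL y - dtu LL x\<bar> / \<bar>y - x\<bar>"
    proof (cases "y < x")
      case True
      then have "dtu LL y \<le> dtu LL x" using dtu_mono[OF LL01 yin xin] by simp
      then have "\<bar>dtu LL y - dtu LL x\<bar> = dtu LL x - dtu LL y" "\<bar>y - x\<bar> = x - y" using True by auto
      then show ?thesis using minus_divide_divide[of "dtu LL x - dtu LL y" "x - y"] by simp
    next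
      case False
      then have "x < y" using yy by simp
      then have "dtu LL x \<le> dtu LL y" using dtu_mono[OF LL01 xin yin] by simp
      then show ?thesis using \<open>x < y\<close> by simp
    qed
    have "Z / cmin \<le> EE x k" using K k(1) by blast
    then have "cmin * (Z / cmin) \<le> cmin * EE x k" using cmin_pos by (intro mult_left_mono) auto
    then have "Z \<le> cmin * EE x k" using cmin_pos by simp
    also have "cmin * EE x k = (Bk x k * cmin) * (Qn ?D k)^2" unfolding EE_def by simp
    also have "\<dots> \<le> \<bar>dtu LL y - dtu LL x\<bar> * (Qn ?D k)^2" using G by (intro mult_right_mono) auto
    also have "\<dots> \<le> \<bar>dtu LL y - dtu LL x\<bar> / \<bar>y - x\<bar>"
    proof -
      have c3: "(Qn ?D k)^2 * \<bar>y - x\<bar> \<le> 1" using cl2 by (simp add: mult.commute)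
      have "\<bar>dtu LL y - dtu LL x\<bar> * ((Qn ?D k)^2 * \<bar>y - x\<bar>) \<le> \<bar>dtu LL y - dtu LL x\<bar>"
        by (rule mult_left_le[OF c3]) simp
      then show ?thesis using yx0 by (simp add: le_divide_eq mult.assoc)
    qed
    finally show "Z \<le> (dtu LL y - dtu LL x) / (y - x)" unfolding nonneg .
  qed
qed

end

theorem theorem3:
  fixes \<phi> :: real
  defines "\<phi> \<equiv> (1 + sqrt 5) / 2"
  shows "(\<forall>x. 0 < x \<and> x < 1 \<and> x \<notin> \<rat> \<and> (\<forall>n. cf_pq x n \<le> 2) \<longrightarrow>
            filterlim (\<lambda>y. (dtu (1 / \<phi>) y - dtu (1 / \<phi>) x) / (y - x)) at_top (at x))
       \<and> (\<exists>y. 0 < y \<and> y < 1 \<and> y \<notin> \<rat> \<and> (\<forall>n. cf_pq y n \<le> 3) \<and>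
            (dtu (1 / \<phi>) has_real_derivative 0) (at y))"
proof -
  have L: "1 / \<phi> = LL" unfolding \<phi>_def LL_def ..
  show ?thesis unfolding L
  proof (intro conjI allI impI)
    fix x :: real assume "0 < x \<and> x < 1 \<and> x \<notin> \<rat> \<and> (\<forall>n. cf_pq x n \<le> 2)"
    then show "filterlim (\<lambda>y. (dtu LL y - dtu LL x) / (y - x)) at_top (at x)"
      using part_i by blast
  next
    show "\<exists>y. 0 < y \<and> y < 1 \<and> y \<notin> \<rat> \<and> (\<forall>n. cf_pq y n \<le> 3) \<and> (dtu LL has_real_derivative 0) (at y)"
      using yy_bounds yy_irrat cf_yy deriv_yy by (intro exI[of _ yy]) auto
  qed
qed


end
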